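(* In the setting below, let $m,n$ be the numbers of training and calibration data; let $\hat q_{\beta,m}(x)$ be an estimate (from the training data) of the $\beta$-th conditional quantile $q_\beta(x)$ of $P^{\pi^*}_{Y\mid X=x}$, let $\hat w_m(x,y)$ be an estimate (from the training data) of $w(x,y)$, and let $\hat C_{m,n}(x)$ be the conformal set constructed with weights $\hat w_m$ and score $s(x,y)=\max\{y-\hat q_{\alpha_{hi},m}(x),\ \hat q_{\alpha_{lo},m}(x)-y\}$, where $\alpha_{hi}-\alpha_{lo}=1-\alpha$. Assume: (1) $\lim_{m\to\infty}\mathbb{E}_{P^{\pi^b}_{X,Y}}|\hat w_m(X,Y)-w(X,Y)|=0$; (2) there exist $r,b_1,b_2>0$ such that $P^{\pi^*}(y\mid x)\in[b_1,b_2]$ uniformly over all $(x,y)$ with $y\in[q_{\alpha_{lo}}(x)-r,q_{\alpha_{lo}}(x)+r]\cup[q_{\alpha_{hi}}(x)-r,q_{\alpha_{hi}}(x)+r]$; (3) there exists $k>0$ with $\lim_{m\to\infty}\mathbb{E}_{X\sim P_X}[H_m^k(X)]=0$, where $H_m(x)=\max\{|\hat q_{\alpha_{lo},m}(x)-q_{\alpha_{lo}}(x)|,|\hat q_{\alpha_{hi},m}(x)-q_{\alpha_{hi}}(x)|\}$. Then for any $t>0$, $$\lim_{m,n\to\infty}\mathbb{P}\Big(\mathbb{P}_{Y\sim P^{\pi^*}_{Y\mid X}}(Y\in\hat C_{m,n}(X)\mid X)\le1-\alpha-t\Big)=0.$$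
   Context: Setting: covariate law $P_X$, outcome law $P(y\mid x,a)$, policies $\pi^b,\pi^*$; $P^\pi_{X,Y}$ is the law of $(X,Y)$ with $X\sim P_X$, $A\mid X\sim\pi$, $Y\mid X,A\sim P(\cdot\mid X,A)$, with conditional density $P^\pi(y\mid x)$; $P^{\pi^*}_{X,Y}\ll P^{\pi^b}_{X,Y}$ and $w=\mathrm{d}P^{\pi^*}_{X,Y}/\mathrm{d}P^{\pi^b}_{X,Y}$. Training data (size $m$) and calibration data $\{(X_i,Y_i)\}_{i=1}^n$ are independent i.i.d. samples from $P^{\pi^b}_{X,Y}$. Conformal set with weights $v$: $V_i=s(X_i,Y_i)$, $\hat F^{x,y}=\sum_{i=1}^n\frac{v(X_i,Y_i)}{\sum_jv(X_j,Y_j)+v(x,y)}\delta_{V_i}+\frac{v(x,y)}{\sum_jv(X_j,Y_j)+v(x,y)}\delta_\infty$, and $\hat C(x)=\{y:s(x,y)\le\mathrm{Quantile}_{1-\alpha}(\hat F^{x,y})\}$, with $\mathrm{Quantile}_\beta(F)=\inf\{z:F((-\infty,z])\ge\beta\}$. The test covariate $X\sim P_X$ is independent of all data; the outer probability is over data and $X$. *)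

theory Defs
  imports "HOL-Probability.Probability"
begin

definition joint_law ::
  "'x measure \<Rightarrow> ('x \<Rightarrow> 'a measure) \<Rightarrow> ('x \<times> 'a \<Rightarrow> real measure) \<Rightarrow> ('x \<times> real) measure" where
  "joint_law PX pol Pout =
     PX \<bind> (\<lambda>x. pol x \<bind> (\<lambda>a. Pout (x, a) \<bind> (\<lambda>y. return (PX \<Otimes>\<^sub>M borel) (x, y))))"

definition cond_law ::
  "('x \<Rightarrow> 'a measure) \<Rightarrow> ('x \<times> 'a \<Rightarrow> real measure) \<Rightarrow> 'x \<Rightarrow> real measure" where
  "cond_law pol Pout x = pol x \<bind> (\<lambda>a. Pout (x, a))"

definition quantile_of :: "real \<Rightarrow> real measure \<Rightarrow> real" where
  "quantile_of b M = Inf {z. measure M {..z} \<ge> b}"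

(* weighted empirical cdf of F^{x,y}: atoms V i with weights v i, atom at +infinity with weight v0 *)
definition wcdf :: "nat \<Rightarrow> (nat \<Rightarrow> real) \<Rightarrow> (nat \<Rightarrow> real) \<Rightarrow> real \<Rightarrow> ereal \<Rightarrow> real" where
  "wcdf n v V v0 z =
     (let S = (\<Sum>i<n. v i) + v0 in
       (\<Sum>i<n. if ereal (V i) \<le> z then v i / S else 0) + (if z = \<infinity> then v0 / S else 0))"

definition wquantile :: "real \<Rightarrow> nat \<Rightarrow> (nat \<Rightarrow> real) \<Rightarrow> (nat \<Rightarrow> real) \<Rightarrow> real \<Rightarrow> ereal" where
  "wquantile b n v V v0 = Inf {z. wcdf n v V v0 z \<ge> b}"

definition conformal_set ::
  "real \<Rightarrow> nat \<Rightarrow> (nat \<Rightarrow> 'x \<times> real) \<Rightarrow> ('x \<Rightarrow> real \<Rightarrow> real) \<Rightarrow> ('x \<Rightarrow> real \<Rightarrow> real) \<Rightarrow> 'x \<Rightarrow> real set" where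
  "conformal_set \<alpha> n Z vw s x =
     {y. ereal (s x y) \<le> wquantile (1 - \<alpha>) n (\<lambda>i. vw (fst (Z i)) (snd (Z i)))
                                          (\<lambda>i. s (fst (Z i)) (snd (Z i))) (vw x y)}"

end

theory Submission
  imports Defs
begin

lemma joint_kernel_meas:
  assumes pol: "pol \<in> PX \<rightarrow>\<^sub>M prob_algebra Act"
    and Pout: "Pout \<in> PX \<Otimes>\<^sub>M Act \<rightarrow>\<^sub>M prob_algebra borel"
  shows "(\<lambda>x. pol x \<bind> (\<lambda>a. Pout (x, a) \<bind> (\<lambda>y. return (PX \<Otimes>\<^sub>M borel) (x, y)))) \<in> PX \<rightarrow>\<^sub>M prob_algebra (PX \<Otimes>\<^sub>M borel)"
  using pol Pout by measurable

lemma cond_law_meas: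
  assumes pol: "pol \<in> PX \<rightarrow>\<^sub>M prob_algebra Act"
    and Pout: "Pout \<in> PX \<Otimes>\<^sub>M Act \<rightarrow>\<^sub>M prob_algebra borel"
  shows "cond_law pol Pout \<in> PX \<rightarrow>\<^sub>M prob_algebra borel"
  using pol Pout unfolding cond_law_def by measurable

lemma joint_law_basic:
  assumes PX: "prob_space PX"
    and pol: "pol \<in> PX \<rightarrow>\<^sub>M prob_algebra Act"
    and Pout: "Pout \<in> PX \<Otimes>\<^sub>M Act \<rightarrow>\<^sub>M prob_algebra borel"
  shows "sets (joint_law PX pol Pout) = sets (PX \<Otimes>\<^sub>M borel)"
    and "space (joint_law PX pol Pout) = space (PX \<Otimes>\<^sub>M borel)"
    and "prob_space (joint_law PX pol Pout)"
proof -
  have K: "(\<lambda>x. pol x \<bind> (\<lambda>a. Pout (x, a) \<bind> (\<lambda>y. return (PX \<Otimes>\<^sub>M borel) (x, y)))) \<in> PX \<rightarrow>\<^sub>M prob_algebra (PX \<Otimes>\<^sub>M borel)"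
    by (rule joint_kernel_meas[OF pol Pout])
  have PXs: "PX \<in> space (prob_algebra PX)" using PX by (simp add: space_prob_algebra)
  show 1: "sets (joint_law PX pol Pout) = sets (PX \<Otimes>\<^sub>M borel)"
    unfolding joint_law_def by (rule sets_bind'[OF PXs K])
  show "space (joint_law PX pol Pout) = space (PX \<Otimes>\<^sub>M borel)"
    using 1 by (rule sets_eq_imp_space_eq)
  show "prob_space (joint_law PX pol Pout)"
    unfolding joint_law_def by (rule prob_space_bind'[OF PXs K])
qed

lemma cond_law_basic:
  assumes pol: "pol \<in> PX \<rightarrow>\<^sub>M prob_algebra Act"
    and Pout: "Pout \<in> PX \<Otimes>\<^sub>M Act \<rightarrow>\<^sub>M prob_algebra borel"
    and x: "x \<in> space PX"
  shows "sets (cond_law pol Pout x) = sets borel" "prob_space (cond_law pol Pout x)"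
    "space (cond_law pol Pout x) = UNIV"
  using measurable_space[OF cond_law_meas[OF pol Pout] x]
  by (auto simp: space_prob_algebra dest: sets_eq_imp_space_eq)

lemma joint_law_emeasure:
  assumes PX: "prob_space PX"
    and pol: "pol \<in> PX \<rightarrow>\<^sub>M prob_algebra Act"
    and Pout: "Pout \<in> PX \<Otimes>\<^sub>M Act \<rightarrow>\<^sub>M prob_algebra borel"
    and A: "A \<in> sets (PX \<Otimes>\<^sub>M borel)"
  shows "emeasure (joint_law PX pol Pout) A = (\<integral>\<^sup>+x. emeasure (cond_law pol Pout x) (Pair x -` A) \<partial>PX)"
proof -
  have K: "(\<lambda>x. pol x \<bind> (\<lambda>a. Pout (x, a) \<bind> (\<lambda>y. return (PX \<Otimes>\<^sub>M borel) (x, y)))) \<in> PX \<rightarrow>\<^sub>M prob_algebra (PX \<Otimes>\<^sub>M borel)"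
    by (rule joint_kernel_meas[OF pol Pout])
  have "emeasure (joint_law PX pol Pout) A = (\<integral>\<^sup>+x. emeasure (pol x \<bind> (\<lambda>a. Pout (x, a) \<bind> (\<lambda>y. return (PX \<Otimes>\<^sub>M borel) (x, y)))) A \<partial>PX)"
    unfolding joint_law_def
    by (rule emeasure_bind[OF prob_space.not_empty[OF PX] measurable_prob_algebraD[OF K] A])
  also have "\<dots> = (\<integral>\<^sup>+x. emeasure (cond_law pol Pout x) (Pair x -` A) \<partial>PX)"
  proof (rule nn_integral_cong)
    fix x assume x: "x \<in> space PX"
    have polx: "pol x \<in> space (prob_algebra Act)" using measurable_space[OF pol x] .
    have sec: "Pair x -` A \<in> sets borel" using A by (rule sets_Pair1)
    have K2: "(\<lambda>a. Pout (x, a) \<bind> (\<lambda>y. return (PX \<Otimes>\<^sub>M borel) (x, y))) \<in> Act \<rightarrow>\<^sub>M prob_algebra (PX \<Otimes>\<^sub>M borel)"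
      using Pout x by measurable
    have K3: "(\<lambda>a. Pout (x, a)) \<in> Act \<rightarrow>\<^sub>M prob_algebra borel"
      using Pout x by measurable
    have "emeasure (pol x \<bind> (\<lambda>a. Pout (x, a) \<bind> (\<lambda>y. return (PX \<Otimes>\<^sub>M borel) (x, y)))) A
        = (\<integral>\<^sup>+a. emeasure (Pout (x, a) \<bind> (\<lambda>y. return (PX \<Otimes>\<^sub>M borel) (x, y))) A \<partial>pol x)"
      by (rule emeasure_bind_prob_algebra[OF polx K2 A])
    also have "\<dots> = (\<integral>\<^sup>+a. emeasure (Pout (x, a)) (Pair x -` A) \<partial>pol x)"
    proof (rule nn_integral_cong)
      fix a assume a: "a \<in> space (pol x)"
      have a': "a \<in> space Act" using a polx by (auto simp: space_prob_algebra dest: sets_eq_imp_space_eq)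
      have Po: "Pout (x, a) \<in> space (prob_algebra borel)"
        using measurable_space[OF Pout, of "(x,a)"] x a' by (auto simp: space_pair_measure)
      have R: "(\<lambda>y. return (PX \<Otimes>\<^sub>M borel) (x, y)) \<in> borel \<rightarrow>\<^sub>M prob_algebra (PX \<Otimes>\<^sub>M borel)"
        using x by measurable
      have "emeasure (Pout (x, a) \<bind> (\<lambda>y. return (PX \<Otimes>\<^sub>M borel) (x, y))) A
          = (\<integral>\<^sup>+y. emeasure (return (PX \<Otimes>\<^sub>M borel) (x, y)) A \<partial>Pout (x, a))"
        by (rule emeasure_bind_prob_algebra[OF Po R A])
      also have "\<dots> = (\<integral>\<^sup>+y. indicator (Pair x -` A) y \<partial>Pout (x, a))"
        using A by (intro nn_integral_cong) (simp add: indicator_def)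
      also have "\<dots> = emeasure (Pout (x, a)) (Pair x -` A)"
        using Po sec by (intro nn_integral_indicator) (simp add: space_prob_algebra)
      finally show "emeasure (Pout (x, a) \<bind> (\<lambda>y. return (PX \<Otimes>\<^sub>M borel) (x, y))) A = emeasure (Pout (x, a)) (Pair x -` A)" .
    qed
    also have "\<dots> = emeasure (cond_law pol Pout x) (Pair x -` A)"
      unfolding cond_law_def by (rule emeasure_bind_prob_algebra[OF polx K3 sec, symmetric])
    finally show "emeasure (pol x \<bind> (\<lambda>a. Pout (x, a) \<bind> (\<lambda>y. return (PX \<Otimes>\<^sub>M borel) (x, y)))) A = emeasure (cond_law pol Pout x) (Pair x -` A)" .
  qed
  finally show ?thesis .
qed


lemma (in real_distribution) quantile_le_iff:
  assumes b0: "0 < \<beta>" and b1: "\<beta> < 1"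
  shows "quantile_of \<beta> M \<le> c \<longleftrightarrow> \<beta> \<le> cdf M c"
proof -
  define S where "S = {z. \<beta> \<le> cdf M z}"
  have q: "quantile_of \<beta> M = Inf S"
    unfolding quantile_of_def S_def cdf_def ..
  have "eventually (\<lambda>z. cdf M z > \<beta>) at_top"
    using order_tendstoD(1)[OF cdf_lim_at_top_prob b1] .
  then obtain z1 where z1: "\<And>z. z \<ge> z1 \<Longrightarrow> cdf M z > \<beta>"
    by (auto simp: eventually_at_top_linorder)
  have Sne: "S \<noteq> {}" using z1[of z1] unfolding S_def by (auto intro!: exI[of _ z1])
  have "eventually (\<lambda>z. cdf M z < \<beta>) at_bot"
    using order_tendstoD(2)[OF cdf_lim_at_bot b0] .
  then obtain z0 where z0: "\<And>z. z \<le> z0 \<Longrightarrow> cdf M z < \<beta>"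
    by (auto simp: eventually_at_bot_linorder)
  have bdd: "bdd_below S"
  proof (rule bdd_belowI)
    fix s assume "s \<in> S"
    then show "z0 \<le> s" using z0[of s] unfolding S_def by (metis linorder_not_le mem_Collect_eq order.strict_iff_not)
  qed
  have Fq: "\<beta> \<le> cdf M (Inf S)"
  proof (rule ccontr)
    assume "\<not> \<beta> \<le> cdf M (Inf S)"
    then have lt: "cdf M (Inf S) < \<beta>" by simp
    have "(cdf M \<longlongrightarrow> cdf M (Inf S)) (at_right (Inf S))"
      using cdf_is_right_cont[of "Inf S"] by (simp add: continuous_within)
    from order_tendstoD(2)[OF this lt]
    obtain b where b: "b > Inf S" "\<And>y. y > Inf S \<Longrightarrow> y < b \<Longrightarrow> cdf M y < \<beta>"
      by (auto simp: eventually_at_right_field)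
    obtain s where s: "s \<in> S" "s < b" using cInf_lessD[OF Sne b(1)] by auto
    define y where "y = (Inf S + b) / 2"
    have "y > Inf S" "y < b" using b(1) by (auto simp: y_def)
    then have "cdf M y < \<beta>" using b(2) by blast
    have Fs: "\<beta> \<le> cdf M s" using s(1) by (simp add: S_def)
    show False
    proof (cases "s \<le> y")
      case True
      then have "cdf M s \<le> cdf M y" by (rule cdf_nondecreasing)
      then show False using Fs \<open>cdf M y < \<beta>\<close> by linarith
    next
      case False
      then have "cdf M s < \<beta>" using b(2)[of s] \<open>y > Inf S\<close> s(2) by linarith
      then show False using Fs by linarith
    qed
  qed
  show ?thesis
  proof
    assume "quantile_of \<beta> M \<le> c"
    then have "Inf S \<le> c" by (simp add: q)
    then show "\<beta> \<le> cdf M c" using Fq cdf_nondecreasing by (meson order_trans)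
  next
    assume "\<beta> \<le> cdf M c"
    then show "quantile_of \<beta> M \<le> c" unfolding q by (intro cInf_lower bdd) (simp add: S_def)
  qed
qed

lemma density_Ioc_bounds:
  fixes f :: "real \<Rightarrow> real"
  assumes f: "f \<in> borel_measurable borel" and ab: "a \<le> b"
  shows "(\<forall>y\<in>{a<..b}. f y \<le> B) \<Longrightarrow> 0 \<le> B \<Longrightarrow> emeasure (density lborel f) {a<..b} \<le> ennreal (B * (b - a))"
    and "(\<forall>y\<in>{a<..b}. B \<le> f y) \<Longrightarrow> 0 \<le> B \<Longrightarrow> ennreal (B * (b - a)) \<le> emeasure (density lborel f) {a<..b}"
proof -
  have e: "emeasure (density lborel f) {a<..b} = (\<integral>\<^sup>+y. ennreal (f y) * indicator {a<..b} y \<partial>lborel)"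
    using f by (subst emeasure_density) auto
  assume B0: "0 \<le> B"
  have l: "(\<integral>\<^sup>+y. ennreal B * indicator {a<..b} y \<partial>lborel) = ennreal (B * (b - a))"
    using ab B0 by (subst nn_integral_cmult_indicator) (auto simp: ennreal_mult)
  { assume "\<forall>y\<in>{a<..b}. f y \<le> B"
    then show "emeasure (density lborel f) {a<..b} \<le> ennreal (B * (b - a))"
      unfolding e l[symmetric]
      by (intro nn_integral_mono) (auto simp: indicator_def intro: ennreal_leI) }
  { assume "\<forall>y\<in>{a<..b}. B \<le> f y"
    then show "ennreal (B * (b - a)) \<le> emeasure (density lborel f) {a<..b}"
      unfolding e l[symmetric]
      by (intro nn_integral_mono) (auto simp: indicator_def intro: ennreal_leI) }
qed

lemma (in real_distribution) quantile_density:
  fixes f :: "real \<Rightarrow> real"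
  assumes b0: "0 < \<beta>" and b1: "\<beta> < 1"
    and Mdens: "M = density lborel f" and f: "f \<in> borel_measurable borel"
    and r: "r > 0" and c1: "c1 > 0" and c2: "c2 > 0"
    and bnd: "\<forall>y. \<bar>y - quantile_of \<beta> M\<bar> \<le> r \<longrightarrow> c1 \<le> f y \<and> f y \<le> c2"
  shows "cdf M (quantile_of \<beta> M) = \<beta>"
    and "\<And>c. 0 \<le> c \<Longrightarrow> c \<le> r \<Longrightarrow> \<beta> + c1 * c \<le> cdf M (quantile_of \<beta> M + c)"
    and "\<And>c. 0 \<le> c \<Longrightarrow> c \<le> r \<Longrightarrow> cdf M (quantile_of \<beta> M + c) \<le> \<beta> + c2 * c"
    and "\<And>c. 0 \<le> c \<Longrightarrow> c \<le> r \<Longrightarrow> \<beta> - c2 * c \<le> cdf M (quantile_of \<beta> M - c)"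
    and "\<And>c. 0 \<le> c \<Longrightarrow> c \<le> r \<Longrightarrow> cdf M (quantile_of \<beta> M - c) \<le> \<beta> - c1 * c"
proof -
  define q where "q = quantile_of \<beta> M"
  have iff: "\<And>c. q \<le> c \<longleftrightarrow> \<beta> \<le> cdf M c" unfolding q_def by (rule quantile_le_iff[OF b0 b1])
  have diff: "cdf M (b) - cdf M a = measure M {a<..b}" if "a \<le> b" for a b
  proof (cases "a = b")
    case True then show ?thesis by simp
  next
    case False then show ?thesis using that finite_borel_measure.cdf_diff_eq[OF finite_borel_measure_M] by simp
  qed
  have up: "measure M {a<..b} \<le> c2 * (b - a)" if "q - r \<le> a" "a \<le> b" "b \<le> q + r" for a b
  proof -
    have "emeasure M {a<..b} \<le> ennreal (c2 * (b - a))"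
      unfolding Mdens using that bnd c2
      by (intro density_Ioc_bounds(1)[OF f]) (auto simp: q_def abs_le_iff)
    then show ?thesis using that c2 by (simp add: emeasure_eq_measure)
  qed
  have lo: "c1 * (b - a) \<le> measure M {a<..b}" if "q - r \<le> a" "a \<le> b" "b \<le> q + r" for a b
  proof -
    have "ennreal (c1 * (b - a)) \<le> emeasure M {a<..b}"
      unfolding Mdens using that bnd c1
      by (intro density_Ioc_bounds(2)[OF f]) (auto simp: q_def abs_le_iff)
    then show ?thesis using that c1 by (simp add: emeasure_eq_measure)
  qed
  have ge: "\<beta> \<le> cdf M q" using iff[of q] by simp
  have le: "cdf M q \<le> \<beta>"
  proof (rule ccontr)
    assume "\<not> cdf M q \<le> \<beta>"
    define d where "d = min r ((cdf M q - \<beta>) / (2 * c2))"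
    have d0: "d > 0" using r c2 \<open>\<not> cdf M q \<le> \<beta>\<close> by (auto simp: d_def)
    have "cdf M (q - d) < \<beta>" using iff[of "q - d"] d0 by auto
    moreover have "cdf M q - cdf M (q - d) \<le> c2 * d"
      using diff[of "q - d" q] up[of "q - d" q] d0 by (auto simp: d_def)
    moreover have "c2 * d \<le> (cdf M q - \<beta>) / 2"
      using c2 by (auto simp: d_def field_simps min_def)
    ultimately show False using \<open>\<not> cdf M q \<le> \<beta>\<close> by argo
  qed
  show "cdf M (quantile_of \<beta> M) = \<beta>" using ge le by (simp add: q_def)
  fix c assume c: "0 \<le> c" "c \<le> r"
  have Fq: "cdf M q = \<beta>" using ge le by simp
  show "\<beta> + c1 * c \<le> cdf M (quantile_of \<beta> M + c)"
    using diff[of q "q + c"] lo[of q "q + c"] c r Fq by (simp add: q_def[symmetric])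
  show "cdf M (quantile_of \<beta> M + c) \<le> \<beta> + c2 * c"
    using diff[of q "q + c"] up[of q "q + c"] c r Fq by (simp add: q_def[symmetric])
  show "\<beta> - c2 * c \<le> cdf M (quantile_of \<beta> M - c)"
    using diff[of "q - c" q] up[of "q - c" q] c r Fq by (simp add: q_def[symmetric])
  show "cdf M (quantile_of \<beta> M - c) \<le> \<beta> - c1 * c"
    using diff[of "q - c" q] lo[of "q - c" q] c r Fq by (simp add: q_def[symmetric])
qed


lemma wquantile_lower:
  fixes \<zeta> :: real
  assumes b: "0 < b" and sv: "0 < (\<Sum>i<n. v i)" and v0: "0 \<le> v0"
    and T: "(\<Sum>i<n. if V i \<le> -\<zeta> then max (v i) 0 else 0) < b * (\<Sum>i<n. v i)"
  shows "ereal (-\<zeta>) \<le> wquantile b n v V v0"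
  unfolding wquantile_def
proof (rule Inf_greatest)
  fix z assume "z \<in> {z. b \<le> wcdf n v V v0 z}"
  then have bz: "b \<le> wcdf n v V v0 z" by simp
  show "ereal (-\<zeta>) \<le> z"
  proof (rule ccontr)
    assume "\<not> ereal (-\<zeta>) \<le> z"
    then have zl: "z < ereal (-\<zeta>)" by simp
    then have zi: "z \<noteq> \<infinity>" by auto
    define S where "S = (\<Sum>i<n. v i) + v0"
    have S0: "S > 0" using sv v0 by (simp add: S_def)
    have "wcdf n v V v0 z = (\<Sum>i<n. if ereal (V i) \<le> z then v i / S else 0)"
      unfolding S_def wcdf_def Let_def using zi by simp
    also have "\<dots> \<le> (\<Sum>i<n. (if V i \<le> -\<zeta> then max (v i) 0 else 0) / S)"
    proof (rule sum_mono)
      fix i assume "i \<in> {..<n}"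
      show "(if ereal (V i) \<le> z then v i / S else 0) \<le> (if V i \<le> -\<zeta> then max (v i) 0 else 0) / S"
      proof (cases "ereal (V i) \<le> z")
        case True
        then have "ereal (V i) < ereal (-\<zeta>)" using zl by (rule le_less_trans)
        then have "V i \<le> -\<zeta>" by simp
        then show ?thesis using True S0 by (simp add: divide_right_mono)
      next
        case False
        then show ?thesis using S0 by simp
      qed
    qed
    also have "\<dots> = (\<Sum>i<n. if V i \<le> -\<zeta> then max (v i) 0 else 0) / S"
      by (simp add: sum_divide_distrib)
    also have "\<dots> < b * (\<Sum>i<n. v i) / S"
      using T S0 by (simp add: divide_strict_right_mono)
    also have "\<dots> \<le> b"
      using S0 sv v0 b by (simp add: S_def divide_le_eq)
    finally show False using bz by simp
  qed
qed

lemma wquantile_ge_iff: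
  assumes b: "0 < b"
  shows "c \<le> wquantile b n v V v0 \<longleftrightarrow>
    (\<forall>z\<in>insert \<infinity> ((\<lambda>i. ereal (V i)) ` {..<n}). b \<le> wcdf n v V v0 z \<longrightarrow> c \<le> z)"
proof
  assume "c \<le> wquantile b n v V v0"
  then show "\<forall>z\<in>insert \<infinity> ((\<lambda>i. ereal (V i)) ` {..<n}). b \<le> wcdf n v V v0 z \<longrightarrow> c \<le> z"
    unfolding wquantile_def by (auto intro: order_trans Inf_lower)
next
  assume H: "\<forall>z\<in>insert \<infinity> ((\<lambda>i. ereal (V i)) ` {..<n}). b \<le> wcdf n v V v0 z \<longrightarrow> c \<le> z"
  show "c \<le> wquantile b n v V v0"
    unfolding wquantile_def
  proof (rule Inf_greatest)
    fix z assume "z \<in> {z. b \<le> wcdf n v V v0 z}"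
    then have bz: "b \<le> wcdf n v V v0 z" by simp
    show "c \<le> z"
    proof (cases "z = \<infinity>")
      case True then show ?thesis using H bz by auto
    next
      case False
      define J where "J = {i\<in>{..<n}. ereal (V i) \<le> z}"
      have fJ: "finite J" by (simp add: J_def)
      have w: "wcdf n v V v0 z = (\<Sum>i<n. if ereal (V i) \<le> z then v i / ((\<Sum>i<n. v i) + v0) else 0)"
        using False by (simp add: wcdf_def Let_def)
      show ?thesis
      proof (cases "J = {}")
        case True
        then have "wcdf n v V v0 z = 0" unfolding w J_def by (intro sum.neutral) auto
        then show ?thesis using bz b by simp
      next
        case False
        define m where "m = Max (V ` J)"
        have mJ: "m \<in> V ` J" unfolding m_def using fJ False by (intro Max_in) auto
        then obtain j where j: "j \<in> J" "m = V j" by auto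
        have mz: "ereal m \<le> z" using j by (simp add: J_def)
        have eqv: "V i \<le> m \<longleftrightarrow> ereal (V i) \<le> z" if "i < n" for i
        proof
          assume "V i \<le> m" then have "ereal (V i) \<le> ereal m" by simp
          then show "ereal (V i) \<le> z" using mz by (rule order_trans)
        next
          assume "ereal (V i) \<le> z"
          then have "i \<in> J" using that by (simp add: J_def)
          then have "V i \<le> m" unfolding m_def using fJ by (intro Max_ge) auto
          then show "V i \<le> m" by simp
        qed
        have "wcdf n v V v0 (ereal m) = (\<Sum>i<n. if V i \<le> m then v i / ((\<Sum>i<n. v i) + v0) else 0)"
          by (simp add: wcdf_def Let_def)
        also have "\<dots> = wcdf n v V v0 z"
          unfolding w by (intro sum.cong refl) (simp add: eqv)
        finally have "wcdf n v V v0 (ereal m) = wcdf n v V v0 z" .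
        then have "b \<le> wcdf n v V v0 (ereal m)" using bz by simp
        moreover have "ereal m \<in> insert \<infinity> ((\<lambda>i. ereal (V i)) ` {..<n})"
          using j by (auto simp: J_def)
        ultimately have "c \<le> ereal m" using H by blast
        then show ?thesis using mz by (rule order_trans)
      qed
    qed
  qed
qed

lemma conformal_set_alt:
  assumes "0 < 1 - \<alpha>"
  shows "conformal_set \<alpha> n Z vw s x = {y. \<forall>z\<in>insert \<infinity> ((\<lambda>i. ereal (s (fst (Z i)) (snd (Z i)))) ` {..<n}).
      1 - \<alpha> \<le> wcdf n (\<lambda>i. vw (fst (Z i)) (snd (Z i))) (\<lambda>i. s (fst (Z i)) (snd (Z i))) (vw x y) z \<longrightarrow> ereal (s x y) \<le> z}"
  unfolding conformal_set_def by (subst wquantile_ge_iff[OF assms]) simp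

lemma conformal_set_sets:
  assumes "0 < 1 - \<alpha>"
    and [measurable]: "(\<lambda>y. vw x y) \<in> borel_measurable borel" "(\<lambda>y. s x y) \<in> borel_measurable borel"
  shows "conformal_set \<alpha> n Z vw s x \<in> sets borel"
proof -
  have [measurable]: "(\<lambda>y. wcdf n v V (vw x y) z) \<in> borel_measurable borel" for v V z
    unfolding wcdf_def Let_def by measurable
  show ?thesis
    unfolding conformal_set_alt[OF assms(1)] by measurable
qed


locale setting =
  fixes PX :: "'x measure" and Act :: "'a measure"
    and pib pis :: "'x \<Rightarrow> 'a measure"
    and Pout :: "'x \<times> 'a \<Rightarrow> real measure"
    and p :: "'x \<Rightarrow> real \<Rightarrow> real"
    and \<alpha> \<alpha>lo \<alpha>hi :: real
    and Pb Ps :: "('x \<times> real) measure"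
  assumes Pb_def: "Pb = joint_law PX pib Pout"
    and Ps_def: "Ps = joint_law PX pis Pout"
    and PX: "prob_space PX"
    and pib: "pib \<in> PX \<rightarrow>\<^sub>M prob_algebra Act"
    and pis: "pis \<in> PX \<rightarrow>\<^sub>M prob_algebra Act"
    and Pout: "Pout \<in> PX \<Otimes>\<^sub>M Act \<rightarrow>\<^sub>M prob_algebra borel"
    and dens: "\<forall>x\<in>space PX. cond_law pis Pout x = density lborel (p x)"
    and p_nonneg: "\<forall>x y. 0 \<le> p x y"
    and p_meas: "(\<lambda>(x, y). p x y) \<in> borel_measurable (PX \<Otimes>\<^sub>M borel)"
    and abs_cont: "absolutely_continuous Pb Ps"
    and alpha: "0 < \<alpha>" "\<alpha> < 1" "0 < \<alpha>lo" "\<alpha>lo < \<alpha>hi" "\<alpha>hi < 1" "\<alpha>hi - \<alpha>lo = 1 - \<alpha>"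
begin

sublocale PX: prob_space PX by (rule PX)

lemma Pb_sets[measurable_cong]: "sets Pb = sets (PX \<Otimes>\<^sub>M borel)"
  and Pb_space: "space Pb = space (PX \<Otimes>\<^sub>M borel)"
  and Pb_prob: "prob_space Pb"
  using joint_law_basic[OF PX pib Pout] by (simp_all add: Pb_def)

lemma Ps_sets[measurable_cong]: "sets Ps = sets (PX \<Otimes>\<^sub>M borel)"
  and Ps_space: "space Ps = space (PX \<Otimes>\<^sub>M borel)"
  and Ps_prob: "prob_space Ps"
  using joint_law_basic[OF PX pis Pout] by (simp_all add: Ps_def)

sublocale Pb: prob_space Pb by (rule Pb_prob)
sublocale Ps: prob_space Ps by (rule Ps_prob)

abbreviation "cl \<equiv> cond_law pis Pout"

lemma cl_meas[measurable]: "cl \<in> PX \<rightarrow>\<^sub>M prob_algebra borel"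
  by (rule cond_law_meas[OF pis Pout])

lemma cl_real_distribution: "x \<in> space PX \<Longrightarrow> real_distribution (cl x)"
  using cond_law_basic[OF pis Pout] by (simp add: real_distribution_def real_distribution_axioms_def)

lemma Ps_disint: "A \<in> sets (PX \<Otimes>\<^sub>M borel) \<Longrightarrow> emeasure Ps A = (\<integral>\<^sup>+x. emeasure (cl x) (Pair x -` A) \<partial>PX)"
  unfolding Ps_def by (rule joint_law_emeasure[OF PX pis Pout])

definition w :: "'x \<times> real \<Rightarrow> real" where "w xy = enn2real (RN_deriv Pb Ps xy)"

lemma w_meas[measurable]: "w \<in> borel_measurable Pb"
  unfolding w_def by measurable

lemma w_meas'[measurable]: "w \<in> borel_measurable (PX \<Otimes>\<^sub>M borel)"
  using w_meas by (simp add: measurable_cong_sets[OF Pb_sets refl])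

lemma w_nonneg: "0 \<le> w xy" by (simp add: w_def)

lemma Ps_density: "Ps = density Pb (\<lambda>xy. ennreal (w xy))"
proof -
  have "AE x in Pb. RN_deriv Pb Ps x \<noteq> \<infinity>"
    using Pb.RN_deriv_finite[OF Ps.sigma_finite_measure_axioms abs_cont] Ps_sets Pb_sets by simp
  then have "density Pb (\<lambda>xy. ennreal (w xy)) = density Pb (RN_deriv Pb Ps)"
    by (intro density_cong) (auto simp: w_def ennreal_enn2real_if elim!: AE_mp)
  also have "\<dots> = Ps" using Pb.density_RN_deriv[OF abs_cont] Ps_sets Pb_sets by simp
  finally show ?thesis by simp
qed

lemma Ps_emeasure_w: "A \<in> sets (PX \<Otimes>\<^sub>M borel) \<Longrightarrow> emeasure Ps A = (\<integral>\<^sup>+xy. ennreal (w xy) * indicator A xy \<partial>Pb)"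
  by (subst Ps_density) (simp add: emeasure_density Pb_sets)

lemma w_integral: "(\<integral>\<^sup>+xy. ennreal (w xy) \<partial>Pb) = 1"
proof -
  have "emeasure Ps (space (PX \<Otimes>\<^sub>M borel)) = (\<integral>\<^sup>+xy. ennreal (w xy) * indicator (space (PX \<Otimes>\<^sub>M borel)) xy \<partial>Pb)"
    by (rule Ps_emeasure_w) simp
  also have "\<dots> = (\<integral>\<^sup>+xy. ennreal (w xy) \<partial>Pb)"
    by (rule nn_integral_cong) (simp add: Pb_space)
  finally show ?thesis using Ps.emeasure_space_1 Ps_space by simp
qed

definition qlo :: "'x \<Rightarrow> real" where "qlo x = quantile_of \<alpha>lo (cl x)"
definition qhi :: "'x \<Rightarrow> real" where "qhi x = quantile_of \<alpha>hi (cl x)"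

lemma quantile_meas:
  assumes "0 < \<beta>" "\<beta> < 1"
  shows "(\<lambda>x. quantile_of \<beta> (cl x)) \<in> borel_measurable PX"
proof -
  have "{x \<in> space PX. quantile_of \<beta> (cl x) \<le> c} = {x \<in> space PX. \<beta> \<le> measure (cl x) {..c}}" for c
    using real_distribution.quantile_le_iff[OF cl_real_distribution assms] by (auto simp: cdf_def)
  moreover have "{x \<in> space PX. \<beta> \<le> measure (cl x) {..c}} \<in> sets PX" for c
    by measurable
  ultimately show ?thesis by (subst borel_measurable_iff_le) simp
qed

lemma qlo_meas[measurable]: "qlo \<in> borel_measurable PX"
  using quantile_meas[of \<alpha>lo] alpha unfolding qlo_def[abs_def] by simp
lemma qhi_meas[measurable]: "qhi \<in> borel_measurable PX"
  using quantile_meas[of \<alpha>hi] alpha unfolding qhi_def[abs_def] by simp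

lemma p_sec_meas: "x \<in> space PX \<Longrightarrow> p x \<in> borel_measurable borel"
  using measurable_Pair2[OF p_meas, of x] by simp

end

locale setting2 = setting +
  fixes r b1 b2 :: real
  assumes r: "r > 0" and b1: "b1 > 0" and b2: "b2 > 0"
    and A2: "\<forall>x\<in>space PX. \<forall>y.
                 (\<bar>y - quantile_of \<alpha>lo (cond_law pis Pout x)\<bar> \<le> r \<or>
                  \<bar>y - quantile_of \<alpha>hi (cond_law pis Pout x)\<bar> \<le> r)
                 \<longrightarrow> b1 \<le> p x y \<and> p x y \<le> b2"
begin

lemma lo_bounds:
  assumes x: "x \<in> space PX"
  shows "cdf (cl x) (qlo x) = \<alpha>lo"
    and "\<And>c. 0 \<le> c \<Longrightarrow> c \<le> r \<Longrightarrow> \<alpha>lo + b1 * c \<le> cdf (cl x) (qlo x + c)"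
    and "\<And>c. 0 \<le> c \<Longrightarrow> c \<le> r \<Longrightarrow> cdf (cl x) (qlo x + c) \<le> \<alpha>lo + b2 * c"
    and "\<And>c. 0 \<le> c \<Longrightarrow> c \<le> r \<Longrightarrow> \<alpha>lo - b2 * c \<le> cdf (cl x) (qlo x - c)"
    and "\<And>c. 0 \<le> c \<Longrightarrow> c \<le> r \<Longrightarrow> cdf (cl x) (qlo x - c) \<le> \<alpha>lo - b1 * c"
  using real_distribution.quantile_density[OF cl_real_distribution[OF x], of \<alpha>lo "p x" r b1 b2]
    alpha dens x p_sec_meas[OF x] r b1 b2 A2 unfolding qlo_def by auto

lemma hi_bounds:
  assumes x: "x \<in> space PX"
  shows "cdf (cl x) (qhi x) = \<alpha>hi"
    and "\<And>c. 0 \<le> c \<Longrightarrow> c \<le> r \<Longrightarrow> \<alpha>hi + b1 * c \<le> cdf (cl x) (qhi x + c)"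
    and "\<And>c. 0 \<le> c \<Longrightarrow> c \<le> r \<Longrightarrow> cdf (cl x) (qhi x + c) \<le> \<alpha>hi + b2 * c"
    and "\<And>c. 0 \<le> c \<Longrightarrow> c \<le> r \<Longrightarrow> \<alpha>hi - b2 * c \<le> cdf (cl x) (qhi x - c)"
    and "\<And>c. 0 \<le> c \<Longrightarrow> c \<le> r \<Longrightarrow> cdf (cl x) (qhi x - c) \<le> \<alpha>hi - b1 * c"
  using real_distribution.quantile_density[OF cl_real_distribution[OF x], of \<alpha>hi "p x" r b1 b2]
    alpha dens x p_sec_meas[OF x] r b1 b2 A2 unfolding qhi_def by auto

lemma measure_Ioc_ge: "x \<in> space PX \<Longrightarrow> cdf (cl x) b - cdf (cl x) a \<le> measure (cl x) {a<..b}"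
proof -
  assume x: "x \<in> space PX"
  interpret real_distribution "cl x" by (rule cl_real_distribution[OF x])
  show ?thesis
  proof (cases "a < b")
    case True then show ?thesis using finite_borel_measure.cdf_diff_eq[OF finite_borel_measure_M True] by simp
  next
    case False then have "cdf (cl x) b \<le> cdf (cl x) a" by (intro cdf_nondecreasing) simp
    then show ?thesis using measure_nonneg[of "cl x" "{a<..b}"] by linarith
  qed
qed

lemma measure_Ioc_le: "x \<in> space PX \<Longrightarrow> a \<le> b \<Longrightarrow> measure (cl x) {a<..b} = cdf (cl x) b - cdf (cl x) a"
proof -
  assume x: "x \<in> space PX" and ab: "a \<le> b"
  interpret real_distribution "cl x" by (rule cl_real_distribution[OF x])
  show ?thesis
  proof (cases "a < b")
    case True then show ?thesis using finite_borel_measure.cdf_diff_eq[OF finite_borel_measure_M True] by simp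
  next
    case False then show ?thesis using ab by simp
  qed
qed

lemma coverage_lower:
  assumes x: "x \<in> space PX" and z: "0 < \<zeta>"
    and h: "\<bar>lo - qlo x\<bar> \<le> h" "\<bar>hi - qhi x\<bar> \<le> h" and hr: "h + \<zeta> \<le> r"
  shows "1 - \<alpha> - 2 * b2 * (h + \<zeta>) \<le> measure (cl x) {y. lo + \<zeta> \<le> y \<and> y \<le> hi - \<zeta>}"
proof -
  interpret real_distribution "cl x" by (rule cl_real_distribution[OF x])
  define c where "c = h + \<zeta>"
  have c0: "0 \<le> c" "c \<le> r" using h z hr by (auto simp: c_def)
  have sub: "{qlo x + c<..qhi x - c} \<subseteq> {y. lo + \<zeta> \<le> y \<and> y \<le> hi - \<zeta>}"
    using h by (auto simp: c_def abs_le_iff)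
  have "cdf (cl x) (qhi x - c) - cdf (cl x) (qlo x + c) \<le> measure (cl x) {qlo x + c<..qhi x - c}"
    by (rule measure_Ioc_ge[OF x])
  also have "\<dots> \<le> measure (cl x) {y. lo + \<zeta> \<le> y \<and> y \<le> hi - \<zeta>}"
    by (intro finite_measure_mono sub) simp
  finally show ?thesis
    using lo_bounds(3)[OF x c0] hi_bounds(4)[OF x c0] alpha by (simp add: c_def algebra_simps)
qed

lemma coverage_upper:
  assumes x: "x \<in> space PX" and z: "0 < \<zeta>" "\<zeta> \<le> 2 * r" "b1 * \<zeta> \<le> 2 * (1 - \<alpha>)"
    and h: "\<bar>lo - qlo x\<bar> \<le> \<zeta> / 2" "\<bar>hi - qhi x\<bar> \<le> \<zeta> / 2"
  shows "measure (cl x) {y. lo + \<zeta> \<le> y \<and> y \<le> hi - \<zeta>} \<le> 1 - \<alpha> - b1 * \<zeta> / 2"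
proof -
  interpret real_distribution "cl x" by (rule cl_real_distribution[OF x])
  have sub: "{y. lo + \<zeta> \<le> y \<and> y \<le> hi - \<zeta>} \<subseteq> {qlo x<..qhi x - \<zeta> / 2}"
  proof
    fix y assume "y \<in> {y. lo + \<zeta> \<le> y \<and> y \<le> hi - \<zeta>}"
    then have "lo + \<zeta> \<le> y" "y \<le> hi - \<zeta>" by auto
    moreover have "qlo x - \<zeta> / 2 \<le> lo" "hi \<le> qhi x + \<zeta> / 2" using h unfolding abs_le_iff by linarith+
    ultimately show "y \<in> {qlo x<..qhi x - \<zeta> / 2}" using z by auto
  qed
  have "measure (cl x) {y. lo + \<zeta> \<le> y \<and> y \<le> hi - \<zeta>} \<le> measure (cl x) {qlo x<..qhi x - \<zeta> / 2}"
    by (intro finite_measure_mono sub) simp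
  also have "\<dots> \<le> 1 - \<alpha> - b1 * \<zeta> / 2"
  proof (cases "qlo x \<le> qhi x - \<zeta> / 2")
    case True
    have c0: "0 \<le> \<zeta> / 2" "\<zeta> / 2 \<le> r" using z by auto
    show ?thesis using measure_Ioc_le[OF x True] lo_bounds(1)[OF x] hi_bounds(5)[OF x c0] alpha
      by (simp add: algebra_simps)
  next
    case False then show ?thesis using z by simp
  qed
  finally show ?thesis .
qed

end

locale setting3 = setting2 +
  fixes qlo_hat qhi_hat :: "nat \<Rightarrow> _ \<Rightarrow> _ \<Rightarrow> real" and w_hat :: "nat \<Rightarrow> _ \<Rightarrow> _ \<Rightarrow> real \<Rightarrow> real"
  assumes qlo_hat_meas: "\<forall>m. (\<lambda>(D, x). qlo_hat m D x) \<in> borel_measurable (PiM {..<m} (\<lambda>_. Pb) \<Otimes>\<^sub>M PX)"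
    and qhi_hat_meas: "\<forall>m. (\<lambda>(D, x). qhi_hat m D x) \<in> borel_measurable (PiM {..<m} (\<lambda>_. Pb) \<Otimes>\<^sub>M PX)"
    and w_hat_meas: "\<forall>m. (\<lambda>(D, xy). w_hat m D (fst xy) (snd xy)) \<in> borel_measurable (PiM {..<m} (\<lambda>_. Pb) \<Otimes>\<^sub>M Pb)"
begin

abbreviation "MM m \<equiv> PiM {..<m} (\<lambda>_. Pb)"

definition sc where
  "sc m D x y = max (y - qhi_hat m D x) (qlo_hat m D x - y)"

definition H where
  "H m D x = max \<bar>qlo_hat m D x - qlo x\<bar> \<bar>qhi_hat m D x - qhi x\<bar>"

lemma qlo_hat_m[measurable]: "(\<lambda>\<omega>. qlo_hat m (fst \<omega>) (snd \<omega>)) \<in> borel_measurable (MM m \<Otimes>\<^sub>M PX)"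
  using qlo_hat_meas by (simp add: case_prod_beta')
lemma qhi_hat_m[measurable]: "(\<lambda>\<omega>. qhi_hat m (fst \<omega>) (snd \<omega>)) \<in> borel_measurable (MM m \<Otimes>\<^sub>M PX)"
  using qhi_hat_meas by (simp add: case_prod_beta')
lemma w_hat_m[measurable]: "(\<lambda>\<omega>. w_hat m (fst \<omega>) (fst (snd \<omega>)) (snd (snd \<omega>))) \<in> borel_measurable (MM m \<Otimes>\<^sub>M Pb)"
  using w_hat_meas by (simp add: case_prod_beta')

lemma H_meas[measurable]: "(\<lambda>\<omega>. H m (fst \<omega>) (snd \<omega>)) \<in> borel_measurable (MM m \<Otimes>\<^sub>M PX)"
  unfolding H_def by measurable

lemma to_DX_meas: "(\<lambda>\<omega>. (fst \<omega>, fst (snd \<omega>))) \<in> MM m \<Otimes>\<^sub>M Pb \<rightarrow>\<^sub>M MM m \<Otimes>\<^sub>M PX"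
  by measurable

lemma sc_meas[measurable]: "(\<lambda>\<omega>. sc m (fst \<omega>) (fst (snd \<omega>)) (snd (snd \<omega>))) \<in> borel_measurable (MM m \<Otimes>\<^sub>M Pb)"
proof -
  have a: "(\<lambda>\<omega>. qlo_hat m (fst \<omega>) (fst (snd \<omega>))) \<in> borel_measurable (MM m \<Otimes>\<^sub>M Pb)"
    using measurable_compose[OF to_DX_meas qlo_hat_m] by (simp add: comp_def)
  have b: "(\<lambda>\<omega>. qhi_hat m (fst \<omega>) (fst (snd \<omega>))) \<in> borel_measurable (MM m \<Otimes>\<^sub>M Pb)"
    using measurable_compose[OF to_DX_meas qhi_hat_m] by (simp add: comp_def)
  show ?thesis unfolding sc_def using a b by measurable
qed

lemma sc_sec_meas: "D \<in> space (MM m) \<Longrightarrow> (\<lambda>xy. sc m D (fst xy) (snd xy)) \<in> borel_measurable (PX \<Otimes>\<^sub>M borel)"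
  using measurable_Pair2[OF sc_meas, of D] by (simp add: measurable_cong_sets[OF Pb_sets refl])

lemma w_hat_sec_meas: "D \<in> space (MM m) \<Longrightarrow> (\<lambda>xy. w_hat m D (fst xy) (snd xy)) \<in> borel_measurable (PX \<Otimes>\<^sub>M borel)"
  using measurable_Pair2[OF w_hat_m, of D] by (simp add: measurable_cong_sets[OF Pb_sets refl])

lemma H_sec_meas: "D \<in> space (MM m) \<Longrightarrow> (\<lambda>x. H m D x) \<in> borel_measurable PX"
  using measurable_Pair2[OF H_meas, of D] by simp

lemma sc_le_iff: "sc m D x y \<le> -\<zeta> \<longleftrightarrow> qlo_hat m D x + \<zeta> \<le> y \<and> y \<le> qhi_hat m D x - \<zeta>"
  unfolding sc_def by auto

lemma Ps_sc_bound:
  assumes D: "D \<in> space (MM m)" and z: "0 < \<zeta>" "\<zeta> \<le> 2 * r" "b1 * \<zeta> \<le> 2 * (1 - \<alpha>)"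
  shows "emeasure Ps {xy \<in> space (PX \<Otimes>\<^sub>M borel). sc m D (fst xy) (snd xy) \<le> -\<zeta>}
     \<le> ennreal (1 - \<alpha> - b1 * \<zeta> / 2) + emeasure PX {x \<in> space PX. \<zeta> / 2 < H m D x}"
proof -
  note [measurable] = sc_sec_meas[OF D] H_sec_meas[OF D]
  define A where "A = {xy \<in> space (PX \<Otimes>\<^sub>M borel). sc m D (fst xy) (snd xy) \<le> -\<zeta>}"
  have A: "A \<in> sets (PX \<Otimes>\<^sub>M borel)" unfolding A_def by measurable
  have B: "{x \<in> space PX. \<zeta> / 2 < H m D x} \<in> sets PX" by measurable
  have sec: "Pair x -` A = {y. qlo_hat m D x + \<zeta> \<le> y \<and> y \<le> qhi_hat m D x - \<zeta>}" if "x \<in> space PX" for x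
    using that by (auto simp: A_def space_pair_measure sc_le_iff)
  have "emeasure Ps A = (\<integral>\<^sup>+x. emeasure (cl x) (Pair x -` A) \<partial>PX)"
    by (rule Ps_disint[OF A])
  also have "\<dots> \<le> (\<integral>\<^sup>+x. ennreal (1 - \<alpha> - b1 * \<zeta> / 2) + indicator {x \<in> space PX. \<zeta> / 2 < H m D x} x \<partial>PX)"
  proof (rule nn_integral_mono)
    fix x assume x: "x \<in> space PX"
    interpret real_distribution "cl x" by (rule cl_real_distribution[OF x])
    show "emeasure (cl x) (Pair x -` A) \<le> ennreal (1 - \<alpha> - b1 * \<zeta> / 2) + indicator {x \<in> space PX. \<zeta> / 2 < H m D x} x"
    proof (cases "\<zeta> / 2 < H m D x")
      case True
      have "emeasure (cl x) (Pair x -` A) \<le> 1" by (rule emeasure_le_1)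
      then show ?thesis using True x by (simp add: add_increasing)
    next
      case False
      then have "H m D x \<le> \<zeta> / 2" by simp
      then have h: "\<bar>qlo_hat m D x - qlo x\<bar> \<le> \<zeta> / 2" "\<bar>qhi_hat m D x - qhi x\<bar> \<le> \<zeta> / 2"
        unfolding H_def by (metis max.bounded_iff)+
      have "measure (cl x) (Pair x -` A) \<le> 1 - \<alpha> - b1 * \<zeta> / 2"
        unfolding sec[OF x] by (rule coverage_upper[OF x z h])
      then have "emeasure (cl x) (Pair x -` A) \<le> ennreal (1 - \<alpha> - b1 * \<zeta> / 2)"
        by (simp add: emeasure_eq_measure ennreal_leI)
      then show ?thesis by (simp add: add_increasing2)
    qed
  qed
  also have "\<dots> = ennreal (1 - \<alpha> - b1 * \<zeta> / 2) + emeasure PX {x \<in> space PX. \<zeta> / 2 < H m D x}"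
    using B by (subst nn_integral_add) (auto simp: PX.emeasure_space_1)
  finally show ?thesis unfolding A_def .
qed

lemma Ps_neg_bound:
  assumes D: "D \<in> space (MM m)"
  shows "emeasure Ps {xy \<in> space (PX \<Otimes>\<^sub>M borel). w_hat m D (fst xy) (snd xy) < 0}
     \<le> (\<integral>\<^sup>+xy. ennreal \<bar>w_hat m D (fst xy) (snd xy) - w xy\<bar> \<partial>Pb)"
proof -
  note [measurable] = w_hat_sec_meas[OF D]
  define A where "A = {xy \<in> space (PX \<Otimes>\<^sub>M borel). w_hat m D (fst xy) (snd xy) < 0}"
  have A: "A \<in> sets (PX \<Otimes>\<^sub>M borel)" unfolding A_def by measurable
  have "emeasure Ps A = (\<integral>\<^sup>+xy. ennreal (w xy) * indicator A xy \<partial>Pb)"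
    by (rule Ps_emeasure_w[OF A])
  also have "\<dots> \<le> (\<integral>\<^sup>+xy. ennreal \<bar>w_hat m D (fst xy) (snd xy) - w xy\<bar> \<partial>Pb)"
  proof (rule nn_integral_mono)
    fix xy assume "xy \<in> space Pb"
    show "ennreal (w xy) * indicator A xy \<le> ennreal \<bar>w_hat m D (fst xy) (snd xy) - w xy\<bar>"
    proof (cases "xy \<in> A")
      case True
      then have "w xy \<le> \<bar>w_hat m D (fst xy) (snd xy) - w xy\<bar>" using w_nonneg[of xy] by (auto simp: A_def)
      then show ?thesis using True by (simp add: ennreal_leI)
    qed simp
  qed
  finally show ?thesis unfolding A_def .
qed

end

lemma indep_coords:
  assumes P: "prob_space P" and n: "I \<noteq> {}" "finite I"
  shows "prob_space.indep_vars (PiM I (\<lambda>_. P)) (\<lambda>_. P) (\<lambda>i Z. Z i) I"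
proof -
  interpret prob_space "PiM I (\<lambda>_. P)" by (rule prob_space_PiM) (use P in auto)
  show ?thesis
  proof (subst indep_vars_iff_distr_eq_PiM'[OF n(1)])
    show "\<And>i. i \<in> I \<Longrightarrow> random_variable P (\<lambda>Z. Z i)" by measurable
    have "distr (PiM I (\<lambda>_. P)) (PiM I (\<lambda>_. P)) (\<lambda>x. \<lambda>i\<in>I. x i) = distr (PiM I (\<lambda>_. P)) (PiM I (\<lambda>_. P)) (\<lambda>x. x)"
      by (intro distr_cong) (auto simp: space_PiM)
    also have "\<dots> = PiM I (\<lambda>_. P)" by simp
    also have "\<dots> = PiM I (\<lambda>i. distr (PiM I (\<lambda>_. P)) P (\<lambda>Z. Z i))"
      by (intro PiM_cong refl, subst distr_PiM_component) (use P in auto)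
    finally show "distr (PiM I (\<lambda>_. P)) (PiM I (\<lambda>_. P)) (\<lambda>x. \<lambda>i\<in>I. x i) = PiM I (\<lambda>i. distr (PiM I (\<lambda>_. P)) P (\<lambda>Z. Z i))" .
  qed
qed

lemma hoeffding_prod:
  fixes g :: "'b \<Rightarrow> real"
  assumes P: "prob_space P" and g[measurable]: "g \<in> borel_measurable P"
    and gb: "\<And>z. z \<in> space P \<Longrightarrow> 0 \<le> g z \<and> g z \<le> K" and K: "K > 0" and n: "n > 0" and e: "\<epsilon> \<ge> 0"
  shows "emeasure (PiM {..<n} (\<lambda>_. P)) {Z \<in> space (PiM {..<n} (\<lambda>_. P)). real n * (\<integral>z. g z \<partial>P) + real n * \<epsilon> \<le> (\<Sum>i<n. g (Z i))}
           \<le> ennreal (exp (- 2 * real n * \<epsilon>\<^sup>2 / K\<^sup>2))"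
    and "emeasure (PiM {..<n} (\<lambda>_. P)) {Z \<in> space (PiM {..<n} (\<lambda>_. P)). (\<Sum>i<n. g (Z i)) \<le> real n * (\<integral>z. g z \<partial>P) - real n * \<epsilon>}
           \<le> ennreal (exp (- 2 * real n * \<epsilon>\<^sup>2 / K\<^sup>2))"
proof -
  let ?M = "PiM {..<n} (\<lambda>_. P)"
  interpret prob_space ?M by (rule prob_space_PiM) (use P in auto)
  have ne: "{..<n} \<noteq> {}" using n by auto
  have ind: "indep_vars (\<lambda>_. borel) (\<lambda>i Z. g (Z i)) {..<n}"
    using indep_vars_compose2[OF indep_coords[OF P ne], of "\<lambda>_. g" "\<lambda>_. borel"] by simp
  have ex: "expectation (\<lambda>Z. g (Z i)) = (\<integral>z. g z \<partial>P)" if "i < n" for i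
  proof -
    have "expectation (\<lambda>Z. g (Z i)) = (\<integral>z. g z \<partial>distr ?M P (\<lambda>Z. Z i))"
      by (subst integral_distr) (use that in auto)
    also have "distr ?M P (\<lambda>Z. Z i) = P" by (rule distr_PiM_component) (use P that in auto)
    finally show ?thesis .
  qed
  have sumE: "(\<Sum>i<n. expectation (\<lambda>Z. g (Z i))) = real n * (\<integral>z. g z \<partial>P)"
    using ex by simp
  interpret Hoeffding_ineq ?M "{..<n}" "\<lambda>i Z. g (Z i)" "\<lambda>_. 0" "\<lambda>_. K" "real n * (\<integral>z. g z \<partial>P)"
  proof (unfold_locales)
    show "finite {..<n}" by simp
    show "indep_vars (\<lambda>_. borel) (\<lambda>i Z. g (Z i)) {..<n}" by (rule ind)
    show "\<And>i. i \<in> {..<n} \<Longrightarrow> AE x in ?M. g (x i) \<in> {0..K}"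
      using gb by (intro AE_I2) (auto simp: space_PiM PiE_iff)
    show "real n * (\<integral>z. g z \<partial>P) \<equiv> (\<Sum>i<n. expectation (\<lambda>Z. g (Z i)))" using sumE by simp
  qed
  have pos: "(\<Sum>i<n. (K - 0)\<^sup>2) > 0" using K n by simp
  have eq: "exp (- 2 * (real n * \<epsilon>)\<^sup>2 / (\<Sum>i<n. (K - 0)\<^sup>2)) = exp (- 2 * real n * \<epsilon>\<^sup>2 / K\<^sup>2)"
    using n K by (simp add: power2_eq_square field_simps)
  have e': "real n * \<epsilon> \<ge> 0" using e by simp
  show "emeasure ?M {Z \<in> space ?M. real n * (\<integral>z. g z \<partial>P) + real n * \<epsilon> \<le> (\<Sum>i<n. g (Z i))}
           \<le> ennreal (exp (- 2 * real n * \<epsilon>\<^sup>2 / K\<^sup>2))"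
    using Hoeffding_ineq_ge[OF e' pos] unfolding eq by (simp add: emeasure_eq_measure ennreal_leI)
  show "emeasure ?M {Z \<in> space ?M. (\<Sum>i<n. g (Z i)) \<le> real n * (\<integral>z. g z \<partial>P) - real n * \<epsilon>}
           \<le> ennreal (exp (- 2 * real n * \<epsilon>\<^sup>2 / K\<^sup>2))"
    using Hoeffding_ineq_le[OF e' pos] unfolding eq by (simp add: emeasure_eq_measure ennreal_leI)
qed

lemma nn_integral_pair_fst:
  assumes A: "prob_space A" and B: "prob_space B" and f: "f \<in> borel_measurable A"
  shows "(\<integral>\<^sup>+\<omega>. f (fst \<omega>) \<partial>(A \<Otimes>\<^sub>M B)) = (\<integral>\<^sup>+x. f x \<partial>A)"
proof -
  interpret B: prob_space B by (rule B)
  have "(\<integral>\<^sup>+\<omega>. f (fst \<omega>) \<partial>(A \<Otimes>\<^sub>M B)) = (\<integral>\<^sup>+x. \<integral>\<^sup>+y. f (fst (x, y)) \<partial>B \<partial>A)"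
    using f by (intro B.nn_integral_fst[symmetric]) (simp add: measurable_compose[OF measurable_fst f])
  also have "\<dots> = (\<integral>\<^sup>+x. f x \<partial>A)"
    by (simp add: B.emeasure_space_1)
  finally show ?thesis .
qed

lemma nn_integral_pair_snd:
  assumes A: "prob_space A" and B: "prob_space B" and f: "f \<in> borel_measurable B"
  shows "(\<integral>\<^sup>+\<omega>. f (snd \<omega>) \<partial>(A \<Otimes>\<^sub>M B)) = (\<integral>\<^sup>+x. f x \<partial>B)"
proof -
  interpret A: prob_space A by (rule A)
  interpret B: prob_space B by (rule B)
  interpret AB: pair_sigma_finite A B ..
  have "(\<integral>\<^sup>+\<omega>. f (snd \<omega>) \<partial>(A \<Otimes>\<^sub>M B)) = (\<integral>\<^sup>+y. \<integral>\<^sup>+x. f (snd (x, y)) \<partial>A \<partial>B)"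
    using f by (intro AB.nn_integral_snd[symmetric]) (simp add: measurable_compose[OF measurable_snd f])
  also have "\<dots> = (\<integral>\<^sup>+x. f x \<partial>B)"
    by (simp add: A.emeasure_space_1)
  finally show ?thesis .
qed

lemma nn_integral_component:
  assumes P: "prob_space P" and i: "i < n" and f: "f \<in> borel_measurable P"
  shows "(\<integral>\<^sup>+Z. f (Z i) \<partial>PiM {..<n} (\<lambda>_. P)) = (\<integral>\<^sup>+z. f z \<partial>P)"
proof -
  have "(\<integral>\<^sup>+Z. f (Z i) \<partial>PiM {..<n} (\<lambda>_. P)) = (\<integral>\<^sup>+z. f z \<partial>distr (PiM {..<n} (\<lambda>_. P)) P (\<lambda>Z. Z i))"
    using f i by (subst nn_integral_distr) auto
  also have "distr (PiM {..<n} (\<lambda>_. P)) P (\<lambda>Z. Z i) = P" by (rule distr_PiM_component) (use P i in auto)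
  finally show ?thesis .
qed

lemma nn_integral_drop_middle:
  assumes A: "prob_space A" and B: "prob_space B" and C: "prob_space C"
    and F: "F \<in> borel_measurable (A \<Otimes>\<^sub>M C)"
  shows "(\<integral>\<^sup>+\<omega>. F (fst (fst \<omega>), snd \<omega>) \<partial>((A \<Otimes>\<^sub>M B) \<Otimes>\<^sub>M C)) = integral\<^sup>N (A \<Otimes>\<^sub>M C) F"
proof -
  interpret A: prob_space A by (rule A)
  interpret C: prob_space C by (rule C)
  have AB: "prob_space (A \<Otimes>\<^sub>M B)" by (rule prob_space_pair[OF A B])
  have m1: "(\<lambda>a. \<integral>\<^sup>+x. F (a, x) \<partial>C) \<in> borel_measurable A"
    using F by (rule C.borel_measurable_nn_integral_fst)
  have "(\<integral>\<^sup>+\<omega>. F (fst (fst \<omega>), snd \<omega>) \<partial>((A \<Otimes>\<^sub>M B) \<Otimes>\<^sub>M C))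
      = (\<integral>\<^sup>+u. \<integral>\<^sup>+x. F (fst (fst (u, x)), snd (u, x)) \<partial>C \<partial>(A \<Otimes>\<^sub>M B))"
    using F by (intro C.nn_integral_fst[symmetric] measurable_compose[OF _ F]) measurable
  also have "\<dots> = (\<integral>\<^sup>+u. (\<lambda>a. \<integral>\<^sup>+x. F (a, x) \<partial>C) (fst u) \<partial>(A \<Otimes>\<^sub>M B))" by simp
  also have "\<dots> = (\<integral>\<^sup>+a. \<integral>\<^sup>+x. F (a, x) \<partial>C \<partial>A)"
    by (rule nn_integral_pair_fst[OF A B m1])
  also have "\<dots> = integral\<^sup>N (A \<Otimes>\<^sub>M C) F"
    by (rule C.nn_integral_fst[OF F])
  finally show ?thesis .
qed


context setting begin

lemma w_integrable: "integrable Pb w"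
  using w_integral by (intro integrableI_nn_integral_finite[where x=1]) (auto simp: w_nonneg)

lemma w_int1: "(\<integral>z. w z \<partial>Pb) = 1"
  using w_integral by (subst integral_eq_nn_integral) (auto simp: w_nonneg)

lemma tail_small:
  assumes eta: "\<eta> > 0"
  shows "\<exists>K>0. (\<integral>z. max (w z - K) 0 \<partial>Pb) \<le> \<eta>"
proof -
  have "(\<lambda>j. \<integral>z. max (w z - real j) 0 \<partial>Pb) \<longlonglongrightarrow> (\<integral>z. 0 \<partial>Pb)"
  proof (rule integral_dominated_convergence[where w=w])
    show "(\<lambda>z. 0::real) \<in> borel_measurable Pb" by simp
    show "\<And>j. (\<lambda>z. max (w z - real j) 0) \<in> borel_measurable Pb" by measurable
    show "integrable Pb w" by (rule w_integrable)
    show "AE z in Pb. (\<lambda>j. max (w z - real j) 0) \<longlonglongrightarrow> 0"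
    proof (rule AE_I2)
      fix z
      obtain N :: nat where "w z \<le> real N" using real_arch_simple by blast
      then have "\<forall>j\<ge>N. max (w z - real j) 0 = 0" by auto
      then show "(\<lambda>j. max (w z - real j) 0) \<longlonglongrightarrow> 0"
        by (intro tendsto_eventually) (auto simp: eventually_sequentially)
    qed
    show "\<And>j. AE z in Pb. norm (max (w z - real j) 0) \<le> w z"
      using w_nonneg by (intro AE_I2) auto
  qed
  then have "(\<lambda>j. \<integral>z. max (w z - real j) 0 \<partial>Pb) \<longlonglongrightarrow> 0" by simp
  from order_tendstoD(2)[OF this eta] obtain N where N: "\<And>j. j \<ge> N \<Longrightarrow> (\<integral>z. max (w z - real j) 0 \<partial>Pb) < \<eta>"
    by (auto simp: eventually_sequentially)
  show ?thesis
    using N[of "Suc N"] by (intro exI[of _ "real (Suc N)"]) auto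
qed

lemma min_integral:
  assumes K: "0 \<le> K"
  shows "(\<integral>z. min (w z) K \<partial>Pb) = 1 - (\<integral>z. max (w z - K) 0 \<partial>Pb)"
proof -
  have i1: "integrable Pb (\<lambda>z. max (w z - K) 0)"
    by (rule Bochner_Integration.integrable_bound[OF w_integrable]) (use K w_nonneg in auto)
  have "(\<integral>z. min (w z) K \<partial>Pb) = (\<integral>z. w z - max (w z - K) 0 \<partial>Pb)"
    by (intro Bochner_Integration.integral_cong) auto
  also have "\<dots> = (\<integral>z. w z \<partial>Pb) - (\<integral>z. max (w z - K) 0 \<partial>Pb)"
    by (rule Bochner_Integration.integral_diff[OF w_integrable i1])
  finally show ?thesis by (simp add: w_int1)
qed

end
context setting3 begin

lemma sc_eq: "(\<lambda>x y. max (y - qhi_hat m D x) (qlo_hat m D x - y)) = sc m D"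
  by (auto simp: sc_def fun_eq_iff)

lemma good_cover:
  assumes D: "D \<in> space (MM m)" and x: "x \<in> space PX" and n: "n > 0"
    and z: "0 < \<zeta>" "\<zeta> \<le> r / 2" "3 * b2 * \<zeta> \<le> t / 2"
    and e: "0 < \<epsilon>" "3 * \<epsilon> < 1" and K: "0 \<le> K"
    and ga: "(\<Sum>i<n. \<bar>w_hat m D (fst (Z i)) (snd (Z i)) - w (Z i)\<bar>) < real n * \<epsilon>"
    and gb: "real n * (1 - 2 * \<epsilon>) < (\<Sum>i<n. min (w (Z i)) K)"
    and gc: "(\<Sum>i<n. max (w (Z i) - K) 0) < real n * \<epsilon>"
    and gd: "(\<Sum>i<n. if sc m D (fst (Z i)) (snd (Z i)) \<le> -\<zeta> then min (w (Z i)) K else 0) < real n * (1 - \<alpha> - 8 * \<epsilon>)"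
    and ge: "H m D x < \<zeta> / 2"
    and gf: "measure (cl x) {y. w_hat m D x y < 0} < t / 2"
  shows "1 - \<alpha> - t < measure (cl x) (conformal_set \<alpha> n Z (w_hat m D) (\<lambda>x y. max (y - qhi_hat m D x) (qlo_hat m D x - y)) x)"
proof -
  interpret real_distribution "cl x" by (rule cl_real_distribution[OF x])
  define v where "v i = w_hat m D (fst (Z i)) (snd (Z i))" for i
  define V where "V i = sc m D (fst (Z i)) (snd (Z i))" for i
  define U where "U i = w (Z i)" for i
  have U0: "0 \<le> U i" for i by (simp add: U_def w_nonneg)
  have T1: "(\<Sum>i<n. if V i \<le> -\<zeta> then max (v i) 0 else 0)
      \<le> (\<Sum>i<n. (if V i \<le> -\<zeta> then min (U i) K else 0) + max (U i - K) 0 + \<bar>v i - U i\<bar>)"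
  proof (rule sum_mono)
    fix i
    show "(if V i \<le> -\<zeta> then max (v i) 0 else 0) \<le> (if V i \<le> -\<zeta> then min (U i) K else 0) + max (U i - K) 0 + \<bar>v i - U i\<bar>"
      using U0[of i] by (auto simp: min_def max_def abs_if)
  qed
  also have "\<dots> = (\<Sum>i<n. if V i \<le> -\<zeta> then min (U i) K else 0) + (\<Sum>i<n. max (U i - K) 0) + (\<Sum>i<n. \<bar>v i - U i\<bar>)"
    by (simp add: sum.distrib)
  also have "\<dots> < real n * (1 - \<alpha> - 8 * \<epsilon>) + real n * \<epsilon> + real n * \<epsilon>"
    using ga gc gd unfolding v_def V_def U_def by linarith
  finally have T2: "(\<Sum>i<n. if V i \<le> -\<zeta> then max (v i) 0 else 0) < real n * (1 - \<alpha> - 6 * \<epsilon>)"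
    by (simp add: algebra_simps)
  have "(\<Sum>i<n. min (U i) K) - (\<Sum>i<n. \<bar>v i - U i\<bar>) \<le> (\<Sum>i<n. v i)"
  proof -
    have "(\<Sum>i<n. min (U i) K - \<bar>v i - U i\<bar>) \<le> (\<Sum>i<n. v i)"
      by (rule sum_mono) (auto simp: min_def abs_if)
    then show ?thesis by (simp add: sum_subtractf)
  qed
  then have sv: "real n * (1 - 3 * \<epsilon>) < (\<Sum>i<n. v i)"
    using ga gb unfolding v_def U_def by (simp add: algebra_simps)
  have sv0: "0 < (\<Sum>i<n. v i)"
    using sv e n by (smt (verit) mult_pos_pos of_nat_0_less_iff)
  have "real n * (1 - \<alpha> - 6 * \<epsilon>) \<le> (1 - \<alpha>) * (real n * (1 - 3 * \<epsilon>))"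
  proof -
    have "(1 - \<alpha>) * (3 * \<epsilon>) \<le> 6 * \<epsilon>" using alpha e by (simp add: mult_le_cancel_right1)
    then have "1 - \<alpha> - 6 * \<epsilon> \<le> (1 - \<alpha>) * (1 - 3 * \<epsilon>)" by (simp add: algebra_simps)
    then show ?thesis using n by (simp add: mult_left_mono mult.assoc[symmetric] mult.commute)
  qed
  also have "\<dots> < (1 - \<alpha>) * (\<Sum>i<n. v i)"
    using sv alpha by (intro mult_strict_left_mono) auto
  finally have T: "(\<Sum>i<n. if V i \<le> -\<zeta> then max (v i) 0 else 0) < (1 - \<alpha>) * (\<Sum>i<n. v i)"
    using T2 by linarith
  define C where "C = conformal_set \<alpha> n Z (w_hat m D) (sc m D) x"
  have Cm: "C \<in> sets (cl x)"
  proof -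
    have [measurable]: "(\<lambda>y. w_hat m D x y) \<in> borel_measurable borel"
      using measurable_Pair2[OF w_hat_sec_meas[OF D] x] by simp
    have [measurable]: "(\<lambda>y. sc m D x y) \<in> borel_measurable borel"
      unfolding sc_def by measurable
    show ?thesis unfolding C_def using alpha by (simp add: conformal_set_sets)
  qed
  define A where "A = {y. qlo_hat m D x + \<zeta> \<le> y \<and> y \<le> qhi_hat m D x - \<zeta>}"
  define B where "B = {y. w_hat m D x y < 0}"
  have Bm: "B \<in> sets (cl x)"
  proof -
    have [measurable]: "(\<lambda>y. w_hat m D x y) \<in> borel_measurable borel"
      using measurable_Pair2[OF w_hat_sec_meas[OF D] x] by simp
    show ?thesis unfolding B_def by simp
  qed
  have sub: "A - B \<subseteq> C"
  proof
    fix y assume y: "y \<in> A - B"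
    then have s: "sc m D x y \<le> -\<zeta>" and w0: "0 \<le> w_hat m D x y"
      by (auto simp: A_def B_def sc_le_iff)
    have q: "ereal (-\<zeta>) \<le> wquantile (1 - \<alpha>) n v V (w_hat m D x y)"
      by (rule wquantile_lower[OF _ sv0 w0 T]) (use alpha in simp)
    have e1: "ereal (sc m D x y) \<le> ereal (-\<zeta>)" using s by simp
    have "ereal (sc m D x y) \<le> wquantile (1 - \<alpha>) n v V (w_hat m D x y)"
      by (rule order_trans[OF e1 q])
    then show "y \<in> C" unfolding C_def conformal_set_def v_def V_def by simp
  qed
  have hA: "1 - \<alpha> - 2 * b2 * (H m D x + \<zeta>) \<le> measure (cl x) A"
    unfolding A_def
    by (rule coverage_lower[OF x z(1)]) (use ge z r in \<open>auto simp: H_def\<close>)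
  have "2 * b2 * (H m D x + \<zeta>) \<le> 3 * b2 * \<zeta>"
    using ge b2 by (simp add: algebra_simps)
  have "measure (cl x) A \<le> measure (cl x) (A - B) + measure (cl x) B"
  proof -
    have Am: "A \<in> sets borel" unfolding A_def by measurable
    have "measure (cl x) A \<le> measure (cl x) ((A - B) \<union> B)" by (intro finite_measure_mono) (use Am Bm in auto)
    also have "\<dots> \<le> measure (cl x) (A - B) + measure (cl x) B"
      by (intro measure_subadditive) (use Bm in \<open>auto simp: A_def\<close>)
    finally show ?thesis .
  qed
  moreover have "measure (cl x) (A - B) \<le> measure (cl x) C"
    by (intro finite_measure_mono sub Cm)
  ultimately have "1 - \<alpha> - 3 * b2 * \<zeta> - t / 2 < measure (cl x) C"
    using hA gf \<open>2 * b2 * (H m D x + \<zeta>) \<le> 3 * b2 * \<zeta>\<close> unfolding B_def by linarith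
  then show ?thesis using z unfolding C_def sc_eq by linarith
qed

end
locale setting4 = setting3 +
  fixes k t :: real
  assumes k: "k > 0" and t: "t > 0"
    and A1: "(\<lambda>m. \<integral>\<^sup>+ (D, xy). ennreal \<bar>w_hat m D (fst xy) (snd xy) - enn2real (RN_deriv Pb Ps xy)\<bar>
                 \<partial>(PiM {..<m} (\<lambda>_. Pb) \<Otimes>\<^sub>M Pb)) \<longlonglongrightarrow> 0"
    and A3: "(\<lambda>m. \<integral>\<^sup>+ (D, x). ennreal ((max \<bar>qlo_hat m D x - quantile_of \<alpha>lo (cond_law pis Pout x)\<bar>
                                                 \<bar>qhi_hat m D x - quantile_of \<alpha>hi (cond_law pis Pout x)\<bar>) powr k)
                 \<partial>(PiM {..<m} (\<lambda>_. Pb) \<Otimes>\<^sub>M PX)) \<longlonglongrightarrow> 0"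
begin

definition e :: "nat \<Rightarrow> _ \<Rightarrow> real" where
  "e m u = \<bar>w_hat m (fst u) (fst (snd u)) (snd (snd u)) - w (snd u)\<bar>"

definition a1 where "a1 m = (\<integral>\<^sup>+u. ennreal (e m u) \<partial>(MM m \<Otimes>\<^sub>M Pb))"
definition a3 where "a3 m = (\<integral>\<^sup>+u. ennreal (H m (fst u) (snd u) powr k) \<partial>(MM m \<Otimes>\<^sub>M PX))"

lemma a1_lim: "a1 \<longlonglongrightarrow> 0"
proof -
  have "a1 = (\<lambda>m. \<integral>\<^sup>+ (D, xy). ennreal \<bar>w_hat m D (fst xy) (snd xy) - enn2real (RN_deriv Pb Ps xy)\<bar>
                 \<partial>(PiM {..<m} (\<lambda>_. Pb) \<Otimes>\<^sub>M Pb))"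
    by (auto simp: a1_def e_def w_def case_prod_beta' fun_eq_iff)
  then show ?thesis using A1 by simp
qed

lemma a3_lim: "a3 \<longlonglongrightarrow> 0"
proof -
  have "a3 = (\<lambda>m. \<integral>\<^sup>+ (D, x). ennreal ((max \<bar>qlo_hat m D x - quantile_of \<alpha>lo (cond_law pis Pout x)\<bar>
                                                 \<bar>qhi_hat m D x - quantile_of \<alpha>hi (cond_law pis Pout x)\<bar>) powr k)
                 \<partial>(PiM {..<m} (\<lambda>_. Pb) \<Otimes>\<^sub>M PX))"
    by (auto simp: a3_def H_def qlo_def qhi_def case_prod_beta' fun_eq_iff)
  then show ?thesis using A3 by simp
qed

lemma e_meas[measurable]: "e m \<in> borel_measurable (MM m \<Otimes>\<^sub>M Pb)"
  unfolding e_def[abs_def] by measurable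

lemma Hk_meas[measurable]: "(\<lambda>u. ennreal (H m (fst u) (snd u) powr k)) \<in> borel_measurable (MM m \<Otimes>\<^sub>M PX)"
  by measurable

lemma MM_prob: "prob_space (MM m)"
  by (rule prob_space_PiM) (rule Pb_prob)

lemma int_fst_fst:
  assumes g: "g \<in> borel_measurable (MM m)"
  shows "(\<integral>\<^sup>+\<omega>. g (fst (fst \<omega>)) \<partial>((MM m \<Otimes>\<^sub>M MM n) \<Otimes>\<^sub>M PX)) = (\<integral>\<^sup>+D. g D \<partial>MM m)"
proof -
  have g2: "(\<lambda>u. g (fst u)) \<in> borel_measurable (MM m \<Otimes>\<^sub>M MM n)"
    by (rule measurable_compose[OF measurable_fst g])
  show ?thesis
    using nn_integral_pair_fst[OF prob_space_pair[OF MM_prob MM_prob] PX g2]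
      nn_integral_pair_fst[OF MM_prob MM_prob g] by simp
qed

lemma int_snd_fst:
  assumes g: "g \<in> borel_measurable (MM n)"
  shows "(\<integral>\<^sup>+\<omega>. g (snd (fst \<omega>)) \<partial>((MM m \<Otimes>\<^sub>M MM n) \<Otimes>\<^sub>M PX)) = (\<integral>\<^sup>+Z. g Z \<partial>MM n)"
proof -
  have g2: "(\<lambda>u. g (snd u)) \<in> borel_measurable (MM m \<Otimes>\<^sub>M MM n)"
    by (rule measurable_compose[OF measurable_snd g])
  show ?thesis
    using nn_integral_pair_fst[OF prob_space_pair[OF MM_prob MM_prob] PX g2]
      nn_integral_pair_snd[OF MM_prob MM_prob g] by simp
qed

lemma int_fst:
  assumes g: "g \<in> borel_measurable (MM m \<Otimes>\<^sub>M MM n)"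
  shows "(\<integral>\<^sup>+\<omega>. g (fst \<omega>) \<partial>((MM m \<Otimes>\<^sub>M MM n) \<Otimes>\<^sub>M PX)) = (\<integral>\<^sup>+u. g u \<partial>(MM m \<Otimes>\<^sub>M MM n))"
  by (rule nn_integral_pair_fst[OF prob_space_pair[OF MM_prob MM_prob] PX g])

lemma int_DX:
  assumes g: "g \<in> borel_measurable (MM m \<Otimes>\<^sub>M PX)"
  shows "(\<integral>\<^sup>+\<omega>. g (fst (fst \<omega>), snd \<omega>) \<partial>((MM m \<Otimes>\<^sub>M MM n) \<Otimes>\<^sub>M PX)) = (\<integral>\<^sup>+u. g u \<partial>(MM m \<Otimes>\<^sub>M PX))"
  by (rule nn_integral_drop_middle[OF MM_prob MM_prob PX g])

definition f1 where "f1 m D = (\<integral>\<^sup>+x. ennreal (H m D x powr k) \<partial>PX)"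

lemma f1_meas[measurable]: "f1 m \<in> borel_measurable (MM m)"
  unfolding f1_def[abs_def] using PX.borel_measurable_nn_integral_fst[OF Hk_meas[of m]] by simp

lemma f1_int: "(\<integral>\<^sup>+D. f1 m D \<partial>MM m) = a3 m"
  unfolding f1_def a3_def using PX.nn_integral_fst[OF Hk_meas[of m]] by simp

lemma e_sec_meas: "D \<in> space (MM m) \<Longrightarrow> (\<lambda>z. e m (D, z)) \<in> borel_measurable Pb"
  using measurable_Pair2[OF e_meas, of D] by simp

lemma e_comp_meas[measurable]: "i < n \<Longrightarrow> (\<lambda>u. e m (fst u, snd u i)) \<in> borel_measurable (MM m \<Otimes>\<^sub>M MM n)"
  by measurable

definition f2 where "f2 m n u = (\<Sum>i<n. ennreal (e m (fst u, snd u i)))"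

lemma f2_meas[measurable]: "f2 m n \<in> borel_measurable (MM m \<Otimes>\<^sub>M MM n)"
  unfolding f2_def[abs_def] by measurable

lemma f2_int: "(\<integral>\<^sup>+u. f2 m n u \<partial>(MM m \<Otimes>\<^sub>M MM n)) = of_nat n * a1 m"
proof -
  interpret Mn: prob_space "MM n" by (rule MM_prob)
  have each: "(\<integral>\<^sup>+u. ennreal (e m (fst u, snd u i)) \<partial>(MM m \<Otimes>\<^sub>M MM n)) = a1 m" if i: "i < n" for i
  proof -
    have "(\<integral>\<^sup>+u. ennreal (e m (fst u, snd u i)) \<partial>(MM m \<Otimes>\<^sub>M MM n))
        = (\<integral>\<^sup>+D. \<integral>\<^sup>+Z. ennreal (e m (fst (D, Z), snd (D, Z) i)) \<partial>MM n \<partial>MM m)"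
      using i by (intro Mn.nn_integral_fst[symmetric]) measurable
    also have "\<dots> = (\<integral>\<^sup>+D. \<integral>\<^sup>+z. ennreal (e m (D, z)) \<partial>Pb \<partial>MM m)"
    proof (rule nn_integral_cong)
      fix D assume D: "D \<in> space (MM m)"
      show "(\<integral>\<^sup>+Z. ennreal (e m (fst (D, Z), snd (D, Z) i)) \<partial>MM n) = (\<integral>\<^sup>+z. ennreal (e m (D, z)) \<partial>Pb)"
        using nn_integral_component[OF Pb_prob i, of "\<lambda>z. ennreal (e m (D, z))"] e_sec_meas[OF D] by simp
    qed
    also have "\<dots> = a1 m"
      unfolding a1_def by (rule Pb.nn_integral_fst) measurable
    finally show ?thesis .
  qed
  have "(\<integral>\<^sup>+u. f2 m n u \<partial>(MM m \<Otimes>\<^sub>M MM n)) = (\<Sum>i<n. \<integral>\<^sup>+u. ennreal (e m (fst u, snd u i)) \<partial>(MM m \<Otimes>\<^sub>M MM n))"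
    unfolding f2_def by (rule nn_integral_sum) measurable
  also have "\<dots> = (\<Sum>i<n. a1 m)" using each by simp
  finally show ?thesis by simp
qed

definition f4 where "f4 n K Z = (\<Sum>i<n. ennreal (max (w (Z i) - K) 0))"

lemma f4_meas[measurable]: "f4 n K \<in> borel_measurable (MM n)"
  unfolding f4_def[abs_def] by measurable

lemma f4_int:
  assumes K: "0 \<le> K"
  shows "(\<integral>\<^sup>+Z. f4 n K Z \<partial>MM n) = of_nat n * ennreal (\<integral>z. max (w z - K) 0 \<partial>Pb)"
proof -
  have each: "(\<integral>\<^sup>+Z. ennreal (max (w (Z i) - K) 0) \<partial>MM n) = ennreal (\<integral>z. max (w z - K) 0 \<partial>Pb)" if i: "i < n" for i
  proof -
    have "(\<integral>\<^sup>+Z. ennreal (max (w (Z i) - K) 0) \<partial>MM n) = (\<integral>\<^sup>+z. ennreal (max (w z - K) 0) \<partial>Pb)"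
      by (rule nn_integral_component[OF Pb_prob i]) measurable
    also have "\<dots> = ennreal (\<integral>z. max (w z - K) 0 \<partial>Pb)"
      by (rule nn_integral_eq_integral) (auto intro!: Bochner_Integration.integrable_bound[OF w_integrable] simp: w_nonneg K)
    finally show ?thesis .
  qed
  have "(\<integral>\<^sup>+Z. f4 n K Z \<partial>MM n) = (\<Sum>i<n. \<integral>\<^sup>+Z. ennreal (max (w (Z i) - K) 0) \<partial>MM n)"
    unfolding f4_def by (rule nn_integral_sum) measurable
  also have "\<dots> = (\<Sum>i<n. ennreal (\<integral>z. max (w z - K) 0 \<partial>Pb))" using each by simp
  finally show ?thesis by simp
qed

definition f7 where "f7 m u = emeasure (cl (snd u)) {y. w_hat m (fst u) (snd u) y < 0}"

lemma f7_meas[measurable]: "f7 m \<in> borel_measurable (MM m \<Otimes>\<^sub>M PX)"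
proof -
  have map: "(\<lambda>v. (fst (fst v), (snd (fst v), snd v))) \<in> (MM m \<Otimes>\<^sub>M PX) \<Otimes>\<^sub>M borel \<rightarrow>\<^sub>M MM m \<Otimes>\<^sub>M Pb"
    by measurable
  have wm: "(\<lambda>v. w_hat m (fst (fst v)) (snd (fst v)) (snd v)) \<in> borel_measurable ((MM m \<Otimes>\<^sub>M PX) \<Otimes>\<^sub>M borel)"
    using measurable_compose[OF map w_hat_m[of m]] by (simp add: comp_def)
  have S: "(SIGMA u:space (MM m \<Otimes>\<^sub>M PX). {y. w_hat m (fst u) (snd u) y < 0}) \<in> sets ((MM m \<Otimes>\<^sub>M PX) \<Otimes>\<^sub>M borel)"
  proof -
    have "(SIGMA u:space (MM m \<Otimes>\<^sub>M PX). {y. w_hat m (fst u) (snd u) y < 0})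
        = {v \<in> space ((MM m \<Otimes>\<^sub>M PX) \<Otimes>\<^sub>M borel). w_hat m (fst (fst v)) (snd (fst v)) (snd v) < 0}"
      by (auto simp: space_pair_measure)
    also have "\<dots> \<in> sets ((MM m \<Otimes>\<^sub>M PX) \<Otimes>\<^sub>M borel)"
      using wm by measurable
    finally show ?thesis .
  qed
  have L: "(\<lambda>u. cl (snd u)) \<in> MM m \<Otimes>\<^sub>M PX \<rightarrow>\<^sub>M subprob_algebra borel"
    by (rule measurable_prob_algebraD) measurable
  show ?thesis
    unfolding f7_def[abs_def] by (rule emeasure_measurable_subprob_algebra2[OF S L])
qed

lemma f7_int: "(\<integral>\<^sup>+u. f7 m u \<partial>(MM m \<Otimes>\<^sub>M PX)) \<le> a1 m"
proof -
  have "(\<integral>\<^sup>+u. f7 m u \<partial>(MM m \<Otimes>\<^sub>M PX)) = (\<integral>\<^sup>+D. \<integral>\<^sup>+x. f7 m (D, x) \<partial>PX \<partial>MM m)"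
    by (rule PX.nn_integral_fst[symmetric]) measurable
  also have "\<dots> \<le> (\<integral>\<^sup>+D. \<integral>\<^sup>+z. ennreal (e m (D, z)) \<partial>Pb \<partial>MM m)"
  proof (rule nn_integral_mono)
    fix D assume D: "D \<in> space (MM m)"
    note [measurable] = w_hat_sec_meas[OF D]
    define A where "A = {xy \<in> space (PX \<Otimes>\<^sub>M borel). w_hat m D (fst xy) (snd xy) < 0}"
    have A: "A \<in> sets (PX \<Otimes>\<^sub>M borel)" unfolding A_def by measurable
    have "(\<integral>\<^sup>+x. f7 m (D, x) \<partial>PX) = (\<integral>\<^sup>+x. emeasure (cl x) (Pair x -` A) \<partial>PX)"
      by (intro nn_integral_cong) (auto simp: f7_def A_def space_pair_measure)
    also have "\<dots> = emeasure Ps A" by (rule Ps_disint[OF A, symmetric])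
    also have "\<dots> \<le> (\<integral>\<^sup>+xy. ennreal \<bar>w_hat m D (fst xy) (snd xy) - w xy\<bar> \<partial>Pb)"
      unfolding A_def by (rule Ps_neg_bound[OF D])
    also have "\<dots> = (\<integral>\<^sup>+z. ennreal (e m (D, z)) \<partial>Pb)"
      by (simp add: e_def)
    finally show "(\<integral>\<^sup>+x. f7 m (D, x) \<partial>PX) \<le> (\<integral>\<^sup>+z. ennreal (e m (D, z)) \<partial>Pb)" .
  qed
  also have "\<dots> = a1 m"
    unfolding a1_def by (rule Pb.nn_integral_fst) measurable
  finally show ?thesis .
qed

definition T3 where "T3 n K \<epsilon> = {Z \<in> space (MM n). (\<Sum>i<n. min (w (Z i)) K) \<le> real n * (\<integral>z. min (w z) K \<partial>Pb) - real n * \<epsilon>}"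

lemma T3_sets[measurable]: "T3 n K \<epsilon> \<in> sets (MM n)"
  unfolding T3_def by measurable

lemma T3_bound:
  assumes n: "n > 0" and K: "K > 0" and e: "\<epsilon> \<ge> 0"
  shows "emeasure (MM n) (T3 n K \<epsilon>) \<le> ennreal (exp (- 2 * real n * \<epsilon>\<^sup>2 / K\<^sup>2))"
  unfolding T3_def
  by (rule hoeffding_prod(2)[OF Pb_prob _ _ K n e]) (use K w_nonneg in auto)

definition gD where "gD m \<zeta> K D z = (if sc m D (fst z) (snd z) \<le> -\<zeta> then min (w z) K else 0)"

lemma gD_meas[measurable]: "(\<lambda>u. gD m \<zeta> K (fst u) (snd u)) \<in> borel_measurable (MM m \<Otimes>\<^sub>M Pb)"
  unfolding gD_def by measurable

lemma gD_sec_meas: "D \<in> space (MM m) \<Longrightarrow> gD m \<zeta> K D \<in> borel_measurable Pb"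
  using measurable_Pair2[OF gD_meas, of D] by simp

lemma gD_comp_meas[measurable]: "i < n \<Longrightarrow> (\<lambda>u. gD m \<zeta> K (fst u) (snd u i)) \<in> borel_measurable (MM m \<Otimes>\<^sub>M MM n)"
proof -
  assume i: "i < n"
  have map: "(\<lambda>u. (fst u, snd u i)) \<in> MM m \<Otimes>\<^sub>M MM n \<rightarrow>\<^sub>M MM m \<Otimes>\<^sub>M Pb" by measurable (simp add: i)
  show ?thesis using measurable_compose[OF map gD_meas] by (simp add: comp_def)
qed

lemma gD_integral:
  assumes D: "D \<in> space (MM m)" and z: "0 < \<zeta>" "\<zeta> \<le> 2 * r" "b1 * \<zeta> \<le> 2 * (1 - \<alpha>)"
    and K: "K > 0" and f1: "f1 m D < ennreal ((b1 * \<zeta> / 8) * (\<zeta> / 2) powr k)"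
  shows "(\<integral>z. gD m \<zeta> K D z \<partial>Pb) \<le> 1 - \<alpha> - 3 * b1 * \<zeta> / 8"
proof -
  note [measurable] = sc_sec_meas[OF D] H_sec_meas[OF D] gD_sec_meas[OF D]
  define c where "c = (\<zeta> / 2) powr k"
  have c0: "c > 0" using z by (simp add: c_def)
  have "emeasure PX {x \<in> space PX. \<zeta> / 2 < H m D x} = (\<integral>\<^sup>+x. indicator {x \<in> space PX. \<zeta> / 2 < H m D x} x \<partial>PX)"
    by (rule nn_integral_indicator[symmetric]) measurable
  also have "\<dots> \<le> (\<integral>\<^sup>+x. ennreal (H m D x powr k) * ennreal (1 / c) \<partial>PX)"
  proof (rule nn_integral_mono)
    fix x assume x: "x \<in> space PX"
    show "indicator {x \<in> space PX. \<zeta> / 2 < H m D x} x \<le> ennreal (H m D x powr k) * ennreal (1 / c)"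
    proof (cases "\<zeta> / 2 < H m D x")
      case True
      then have "c \<le> H m D x powr k" unfolding c_def using z k by (intro powr_mono2) auto
      then have "1 \<le> H m D x powr k * (1 / c)" using c0 by (simp add: field_simps)
      then have e1: "ennreal 1 \<le> ennreal (H m D x powr k * (1 / c))" by (rule ennreal_leI)
      have e2: "ennreal (H m D x powr k * (1 / c)) = ennreal (H m D x powr k) * ennreal (1 / c)"
        using c0 by (intro ennreal_mult) auto
      have "1 \<le> ennreal (H m D x powr k) * ennreal (1 / c)" using e1 unfolding e2 ennreal_1 .
      then show ?thesis using True x by simp
    qed simp
  qed
  also have "\<dots> = f1 m D * ennreal (1 / c)"
    unfolding f1_def by (rule nn_integral_multc) measurable
  also have "\<dots> \<le> ennreal ((b1 * \<zeta> / 8) * c) * ennreal (1 / c)"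
    using f1 unfolding c_def by (intro mult_right_mono) auto
  also have "\<dots> = ennreal ((b1 * \<zeta> / 8) * c * (1 / c))"
    using c0 b1 z by (intro ennreal_mult[symmetric]) auto
  also have "\<dots> = ennreal (b1 * \<zeta> / 8)"
    using c0 by simp
  finally have P: "emeasure PX {x \<in> space PX. \<zeta> / 2 < H m D x} \<le> ennreal (b1 * \<zeta> / 8)" .
  define A where "A = {xy \<in> space (PX \<Otimes>\<^sub>M borel). sc m D (fst xy) (snd xy) \<le> -\<zeta>}"
  have A: "A \<in> sets (PX \<Otimes>\<^sub>M borel)" unfolding A_def by measurable
  have nn1: "0 \<le> 1 - \<alpha> - b1 * \<zeta> / 2" using z by simp
  have "emeasure Ps A \<le> ennreal (1 - \<alpha> - b1 * \<zeta> / 2) + emeasure PX {x \<in> space PX. \<zeta> / 2 < H m D x}"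
    unfolding A_def by (rule Ps_sc_bound[OF D z])
  also have "\<dots> \<le> ennreal (1 - \<alpha> - b1 * \<zeta> / 2) + ennreal (b1 * \<zeta> / 8)"
    using P by (rule add_left_mono)
  also have "\<dots> = ennreal (1 - \<alpha> - 3 * b1 * \<zeta> / 8)"
    using nn1 b1 z by (subst ennreal_plus[symmetric]) (auto simp: algebra_simps)
  finally have PsA: "emeasure Ps A \<le> ennreal (1 - \<alpha> - 3 * b1 * \<zeta> / 8)" .
  have gi: "integrable Pb (gD m \<zeta> K D)"
    by (rule Bochner_Integration.integrable_bound[where f="\<lambda>_. K"]) (use K w_nonneg in \<open>auto simp: gD_def\<close>)
  have "ennreal (\<integral>z. gD m \<zeta> K D z \<partial>Pb) = (\<integral>\<^sup>+z. ennreal (gD m \<zeta> K D z) \<partial>Pb)"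
    by (rule nn_integral_eq_integral[OF gi, symmetric]) (use K w_nonneg in \<open>auto simp: gD_def\<close>)
  also have "\<dots> \<le> (\<integral>\<^sup>+xy. ennreal (w xy) * indicator A xy \<partial>Pb)"
  proof (rule nn_integral_mono)
    fix z assume z: "z \<in> space Pb"
    show "ennreal (gD m \<zeta> K D z) \<le> ennreal (w z) * indicator A z"
      using z by (auto simp: gD_def A_def Pb_space intro: ennreal_leI)
  qed
  also have "\<dots> = emeasure Ps A" by (rule Ps_emeasure_w[OF A, symmetric])
  finally have "ennreal (\<integral>z. gD m \<zeta> K D z \<partial>Pb) \<le> ennreal (1 - \<alpha> - 3 * b1 * \<zeta> / 8)"
    using PsA by (rule order_trans)
  moreover have "0 \<le> 1 - \<alpha> - 3 * (b1 * \<zeta>) / 8" using z(3) alpha by argo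
  then have nn2: "0 \<le> 1 - \<alpha> - 3 * b1 * \<zeta> / 8" by (simp add: mult.assoc)
  ultimately show ?thesis using ennreal_le_iff[OF nn2] by blast
qed

definition T5 where "T5 m n \<zeta> K \<epsilon> \<delta> = {u \<in> space (MM m \<Otimes>\<^sub>M MM n). f1 m (fst u) < ennreal \<delta> \<and>
    real n * (1 - \<alpha> - 8 * \<epsilon>) \<le> (\<Sum>i<n. gD m \<zeta> K (fst u) (snd u i))}"

lemma T5_sets[measurable]: "T5 m n \<zeta> K \<epsilon> \<delta> \<in> sets (MM m \<Otimes>\<^sub>M MM n)"
  unfolding T5_def by measurable

lemma T5_bound:
  assumes n: "n > 0" and z: "0 < \<zeta>" "\<zeta> \<le> 2 * r" "b1 * \<zeta> \<le> 2 * (1 - \<alpha>)"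
    and K: "K > 0" and e: "\<epsilon> = b1 * \<zeta> / 24" and d: "\<delta> = (b1 * \<zeta> / 8) * (\<zeta> / 2) powr k"
  shows "emeasure (MM m \<Otimes>\<^sub>M MM n) (T5 m n \<zeta> K \<epsilon> \<delta>) \<le> ennreal (exp (- 2 * real n * \<epsilon>\<^sup>2 / K\<^sup>2))"
proof -
  interpret Mn: prob_space "MM n" by (rule MM_prob)
  interpret Mm: prob_space "MM m" by (rule MM_prob)
  have e0: "\<epsilon> \<ge> 0" unfolding e using b1 z by simp
  have "emeasure (MM m \<Otimes>\<^sub>M MM n) (T5 m n \<zeta> K \<epsilon> \<delta>) = (\<integral>\<^sup>+D. emeasure (MM n) (Pair D -` T5 m n \<zeta> K \<epsilon> \<delta>) \<partial>MM m)"
    by (rule Mn.emeasure_pair_measure_alt) simp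
  also have "\<dots> \<le> (\<integral>\<^sup>+D. ennreal (exp (- 2 * real n * \<epsilon>\<^sup>2 / K\<^sup>2)) \<partial>MM m)"
  proof (rule nn_integral_mono)
    fix D assume D: "D \<in> space (MM m)"
    show "emeasure (MM n) (Pair D -` T5 m n \<zeta> K \<epsilon> \<delta>) \<le> ennreal (exp (- 2 * real n * \<epsilon>\<^sup>2 / K\<^sup>2))"
    proof (cases "f1 m D < ennreal \<delta>")
      case False
      then have "Pair D -` T5 m n \<zeta> K \<epsilon> \<delta> = {}" by (auto simp: T5_def)
      then show ?thesis by simp
    next
      case True
      have gi: "(\<integral>z. gD m \<zeta> K D z \<partial>Pb) \<le> 1 - \<alpha> - 3 * b1 * \<zeta> / 8"
        by (rule gD_integral[OF D z K]) (use True d in simp)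
      have sub: "Pair D -` T5 m n \<zeta> K \<epsilon> \<delta> \<subseteq> {Z \<in> space (MM n). real n * (\<integral>z. gD m \<zeta> K D z \<partial>Pb) + real n * \<epsilon> \<le> (\<Sum>i<n. gD m \<zeta> K D (Z i))}"
      proof
        fix Z assume "Z \<in> Pair D -` T5 m n \<zeta> K \<epsilon> \<delta>"
        then have Z: "Z \<in> space (MM n)" and s: "real n * (1 - \<alpha> - 8 * \<epsilon>) \<le> (\<Sum>i<n. gD m \<zeta> K D (Z i))"
          by (auto simp: T5_def space_pair_measure)
        have "(\<integral>z. gD m \<zeta> K D z \<partial>Pb) + \<epsilon> \<le> 1 - \<alpha> - 8 * \<epsilon>" using gi e by simp
        then have "real n * ((\<integral>z. gD m \<zeta> K D z \<partial>Pb) + \<epsilon>) \<le> real n * (1 - \<alpha> - 8 * \<epsilon>)"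
          by (intro mult_left_mono) auto
        then show "Z \<in> {Z \<in> space (MM n). real n * (\<integral>z. gD m \<zeta> K D z \<partial>Pb) + real n * \<epsilon> \<le> (\<Sum>i<n. gD m \<zeta> K D (Z i))}"
          using Z s by (simp add: distrib_left)
      qed
      have "emeasure (MM n) (Pair D -` T5 m n \<zeta> K \<epsilon> \<delta>) \<le> emeasure (MM n) {Z \<in> space (MM n). real n * (\<integral>z. gD m \<zeta> K D z \<partial>Pb) + real n * \<epsilon> \<le> (\<Sum>i<n. gD m \<zeta> K D (Z i))}"
        by (rule emeasure_mono[OF sub]) (use gD_sec_meas[OF D] in measurable)
      also have "\<dots> \<le> ennreal (exp (- 2 * real n * \<epsilon>\<^sup>2 / K\<^sup>2))"
        by (rule hoeffding_prod(1)[OF Pb_prob gD_sec_meas[OF D] _ K n e0]) (use K w_nonneg in \<open>auto simp: gD_def\<close>)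
      finally show ?thesis .
    qed
  qed
  also have "\<dots> = ennreal (exp (- 2 * real n * \<epsilon>\<^sup>2 / K\<^sup>2))"
    by (simp add: Mm.emeasure_space_1)
  finally show ?thesis .
qed

lemma ennreal_inv_lt:
  assumes c: "c > 0" and a: "a * ennreal (1 / c) < 1"
  shows "a < ennreal c"
proof (rule ccontr)
  assume "\<not> a < ennreal c"
  then have "ennreal c \<le> a" by simp
  then have "ennreal c * ennreal (1 / c) \<le> a * ennreal (1 / c)" by (rule mult_right_mono) simp
  moreover have "ennreal c * ennreal (1 / c) = 1" using c by (simp add: ennreal_mult[symmetric])
  ultimately show False using a by simp
qed

lemma Ebad_sub:
  assumes n: "n > 0"
    and z: "0 < \<zeta>" "\<zeta> \<le> r / 2" "3 * b2 * \<zeta> \<le> t / 2" "b1 * \<zeta> \<le> 2 * (1 - \<alpha>)" "b1 * \<zeta> \<le> 1"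
    and e: "\<epsilon> = b1 * \<zeta> / 24" and d: "\<delta> = (b1 * \<zeta> / 8) * (\<zeta> / 2) powr k"
    and c6: "c6 = (\<zeta> / 2) powr k"
    and K: "K > 0" and tail: "(\<integral>z. max (w z - K) 0 \<partial>Pb) \<le> \<epsilon>"
    and \<omega>: "\<omega> \<in> space ((MM m \<Otimes>\<^sub>M MM n) \<Otimes>\<^sub>M PX)"
    and bad: "measure (cl (snd \<omega>)) (conformal_set \<alpha> n (snd (fst \<omega>)) (w_hat m (fst (fst \<omega>)))
                 (\<lambda>x y. max (y - qhi_hat m (fst (fst \<omega>)) x) (qlo_hat m (fst (fst \<omega>)) x - y)) (snd \<omega>)) \<le> 1 - \<alpha> - t"
  shows "1 \<le> f1 m (fst (fst \<omega>)) * ennreal (1 / \<delta>) + f2 m n (fst \<omega>) * ennreal (1 / (real n * \<epsilon>))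
      + indicator (T3 n K \<epsilon>) (snd (fst \<omega>)) + f4 n K (snd (fst \<omega>)) * ennreal (1 / (real n * \<epsilon>))
      + indicator (T5 m n \<zeta> K \<epsilon> \<delta>) (fst \<omega>) + ennreal (H m (fst (fst \<omega>)) (snd \<omega>) powr k) * ennreal (1 / c6)
      + f7 m (fst (fst \<omega>), snd \<omega>) * ennreal (1 / (t / 2))"
proof (rule ccontr)
  obtain D Z x where \<omega>eq: "\<omega> = ((D, Z), x)" by (metis prod.collapse)
  have D: "D \<in> space (MM m)" and Z: "Z \<in> space (MM n)" and x: "x \<in> space PX"
    using \<omega> by (auto simp: \<omega>eq space_pair_measure)
  assume "\<not> 1 \<le> f1 m (fst (fst \<omega>)) * ennreal (1 / \<delta>) + f2 m n (fst \<omega>) * ennreal (1 / (real n * \<epsilon>))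
      + indicator (T3 n K \<epsilon>) (snd (fst \<omega>)) + f4 n K (snd (fst \<omega>)) * ennreal (1 / (real n * \<epsilon>))
      + indicator (T5 m n \<zeta> K \<epsilon> \<delta>) (fst \<omega>) + ennreal (H m (fst (fst \<omega>)) (snd \<omega>) powr k) * ennreal (1 / c6)
      + f7 m (fst (fst \<omega>), snd \<omega>) * ennreal (1 / (t / 2))"
  then have lt: "f1 m D * ennreal (1 / \<delta>) + f2 m n (D, Z) * ennreal (1 / (real n * \<epsilon>))
      + indicator (T3 n K \<epsilon>) Z + f4 n K Z * ennreal (1 / (real n * \<epsilon>))
      + indicator (T5 m n \<zeta> K \<epsilon> \<delta>) (D, Z) + ennreal (H m D x powr k) * ennreal (1 / c6)
      + f7 m (D, x) * ennreal (1 / (t / 2)) < 1" unfolding \<omega>eq by simp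
  have p1: "f1 m D * ennreal (1 / \<delta>) < 1"
    and p2: "f2 m n (D, Z) * ennreal (1 / (real n * \<epsilon>)) < 1"
    and p3: "indicator (T3 n K \<epsilon>) Z < (1::ennreal)"
    and p4: "f4 n K Z * ennreal (1 / (real n * \<epsilon>)) < 1"
    and p5: "indicator (T5 m n \<zeta> K \<epsilon> \<delta>) (D, Z) < (1::ennreal)"
    and p6: "ennreal (H m D x powr k) * ennreal (1 / c6) < 1"
    and p7: "f7 m (D, x) * ennreal (1 / (t / 2)) < 1"
    using lt by (auto elim!: le_less_trans[rotated] intro: add_increasing add_increasing2)
  have e0: "0 < \<epsilon>" unfolding e using b1 z by simp
  have ne0: "0 < real n * \<epsilon>" using n e0 by simp
  have d0: "0 < \<delta>" unfolding d using b1 z by simp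
  have c60: "0 < c6" using c6 z by simp
  have t0: "0 < t / 2" using t by simp
  have g1: "f1 m D < ennreal \<delta>" by (rule ennreal_inv_lt[OF d0 p1])
  have "f2 m n (D, Z) < ennreal (real n * \<epsilon>)" by (rule ennreal_inv_lt[OF ne0 p2])
  then have ga: "(\<Sum>i<n. \<bar>w_hat m D (fst (Z i)) (snd (Z i)) - w (Z i)\<bar>) < real n * \<epsilon>"
    by (simp add: f2_def e_def ennreal_less_iff)
  have "Z \<notin> T3 n K \<epsilon>" using p3 by (auto simp: indicator_def)
  then have "real n * (\<integral>z. min (w z) K \<partial>Pb) - real n * \<epsilon> < (\<Sum>i<n. min (w (Z i)) K)"
    using Z by (auto simp: T3_def)
  moreover have "(\<integral>z. min (w z) K \<partial>Pb) \<ge> 1 - \<epsilon>" using min_integral[of K] K tail by simp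
  ultimately have gb: "real n * (1 - 2 * \<epsilon>) < (\<Sum>i<n. min (w (Z i)) K)"
    using n by (smt (verit, best) mult_left_mono of_nat_0_le_iff right_diff_distrib)
  have "f4 n K Z < ennreal (real n * \<epsilon>)" by (rule ennreal_inv_lt[OF ne0 p4])
  moreover have "f4 n K Z = ennreal (\<Sum>i<n. max (w (Z i) - K) 0)"
    unfolding f4_def by (rule sum_ennreal) simp
  ultimately have "ennreal (\<Sum>i<n. max (w (Z i) - K) 0) < ennreal (real n * \<epsilon>)" by simp
  then have gc: "(\<Sum>i<n. max (w (Z i) - K) 0) < real n * \<epsilon>"
    by (subst (asm) ennreal_less_iff) (auto intro: sum_nonneg)
  have "(D, Z) \<notin> T5 m n \<zeta> K \<epsilon> \<delta>" using p5 by (auto simp: indicator_def)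
  then have "(\<Sum>i<n. gD m \<zeta> K D (Z i)) < real n * (1 - \<alpha> - 8 * \<epsilon>)"
    using D Z g1 by (auto simp: T5_def space_pair_measure)
  then have gd: "(\<Sum>i<n. if sc m D (fst (Z i)) (snd (Z i)) \<le> -\<zeta> then min (w (Z i)) K else 0) < real n * (1 - \<alpha> - 8 * \<epsilon>)"
    by (simp add: gD_def)
  have "ennreal (H m D x powr k) < ennreal c6" by (rule ennreal_inv_lt[OF c60 p6])
  then have "H m D x powr k < c6" by (simp add: ennreal_less_iff)
  then have ge: "H m D x < \<zeta> / 2"
  proof -
    assume "H m D x powr k < c6"
    show "H m D x < \<zeta> / 2"
    proof (rule ccontr)
      assume "\<not> H m D x < \<zeta> / 2"
      then have "c6 \<le> H m D x powr k" unfolding c6 using z k by (intro powr_mono2) auto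
      then show False using \<open>H m D x powr k < c6\<close> by simp
    qed
  qed
  have "f7 m (D, x) < ennreal (t / 2)" by (rule ennreal_inv_lt[OF t0 p7])
  moreover interpret cx: real_distribution "cl x" by (rule cl_real_distribution[OF x])
  have "f7 m (D, x) = ennreal (measure (cl x) {y. w_hat m D x y < 0})"
    by (simp add: f7_def cx.emeasure_eq_measure)
  ultimately have "ennreal (measure (cl x) {y. w_hat m D x y < 0}) < ennreal (t / 2)" by simp
  then have gf: "measure (cl x) {y. w_hat m D x y < 0} < t / 2"
    by (subst (asm) ennreal_less_iff) auto
  have "3 * \<epsilon> < 1" using e z by simp
  have "1 - \<alpha> - t < measure (cl x) (conformal_set \<alpha> n Z (w_hat m D) (\<lambda>x y. max (y - qhi_hat m D x) (qlo_hat m D x - y)) x)"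
    by (rule good_cover[OF D x n z(1,2,3) e0 \<open>3 * \<epsilon> < 1\<close> _ ga gb gc gd ge gf]) (use K in simp)
  then show False using bad unfolding \<omega>eq by simp
qed

abbreviation "\<Omega> m n \<equiv> (MM m \<Otimes>\<^sub>M MM n) \<Otimes>\<^sub>M PX"

lemma main_bound:
  assumes n: "n > 0"
    and z: "0 < \<zeta>" "\<zeta> \<le> r / 2" "3 * b2 * \<zeta> \<le> t / 2" "b1 * \<zeta> \<le> 2 * (1 - \<alpha>)" "b1 * \<zeta> \<le> 1"
    and e: "\<epsilon> = b1 * \<zeta> / 24" and d: "\<delta> = (b1 * \<zeta> / 8) * (\<zeta> / 2) powr k"
    and c6: "c6 = (\<zeta> / 2) powr k"
    and K: "K > 0" and tail: "(\<integral>z. max (w z - K) 0 \<partial>Pb) \<le> \<epsilon>"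
  shows "outer_measure_of (\<Omega> m n)
             {((D, Z), x) \<in> space (\<Omega> m n).
                measure (cond_law pis Pout x)
                  (conformal_set \<alpha> n Z (w_hat m D)
                     (\<lambda>x y. max (y - qhi_hat m D x) (qlo_hat m D x - y)) x)
                \<le> 1 - \<alpha> - t}
     \<le> a3 m * ennreal (1 / \<delta>) + of_nat n * a1 m * ennreal (1 / (real n * \<epsilon>))
       + ennreal (exp (- 2 * real n * \<epsilon>\<^sup>2 / K\<^sup>2))
       + of_nat n * ennreal (\<integral>z. max (w z - K) 0 \<partial>Pb) * ennreal (1 / (real n * \<epsilon>))
       + ennreal (exp (- 2 * real n * \<epsilon>\<^sup>2 / K\<^sup>2))
       + a3 m * ennreal (1 / c6) + a1 m * ennreal (1 / (t / 2))"
proof -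
  define P1 where "P1 \<omega> = f1 m (fst (fst \<omega>)) * ennreal (1 / \<delta>)" for \<omega> :: "((nat \<Rightarrow> 'a \<times> real) \<times> (nat \<Rightarrow> 'a \<times> real)) \<times> 'a"
  define P2 where "P2 \<omega> = f2 m n (fst \<omega>) * ennreal (1 / (real n * \<epsilon>))" for \<omega> :: "((nat \<Rightarrow> 'a \<times> real) \<times> (nat \<Rightarrow> 'a \<times> real)) \<times> 'a"
  define P3 where "P3 \<omega> = (indicator (T3 n K \<epsilon>) (snd (fst \<omega>)) :: ennreal)" for \<omega> :: "((nat \<Rightarrow> 'a \<times> real) \<times> (nat \<Rightarrow> 'a \<times> real)) \<times> 'a"
  define P4 where "P4 \<omega> = f4 n K (snd (fst \<omega>)) * ennreal (1 / (real n * \<epsilon>))" for \<omega> :: "((nat \<Rightarrow> 'a \<times> real) \<times> (nat \<Rightarrow> 'a \<times> real)) \<times> 'a"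
  define P5 where "P5 \<omega> = (indicator (T5 m n \<zeta> K \<epsilon> \<delta>) (fst \<omega>) :: ennreal)" for \<omega> :: "((nat \<Rightarrow> 'a \<times> real) \<times> (nat \<Rightarrow> 'a \<times> real)) \<times> 'a"
  define P6 where "P6 \<omega> = ennreal (H m (fst (fst \<omega>)) (snd \<omega>) powr k) * ennreal (1 / c6)" for \<omega> :: "((nat \<Rightarrow> 'a \<times> real) \<times> (nat \<Rightarrow> 'a \<times> real)) \<times> 'a"
  define P7 where "P7 \<omega> = f7 m (fst (fst \<omega>), snd \<omega>) * ennreal (1 / (t / 2))" for \<omega> :: "((nat \<Rightarrow> 'a \<times> real) \<times> (nat \<Rightarrow> 'a \<times> real)) \<times> 'a"
  have map: "(\<lambda>\<omega>. (fst (fst \<omega>), snd \<omega>)) \<in> \<Omega> m n \<rightarrow>\<^sub>M MM m \<Otimes>\<^sub>M PX" by measurable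
  have [measurable]: "P1 \<in> borel_measurable (\<Omega> m n)" unfolding P1_def[abs_def] by measurable
  have [measurable]: "P2 \<in> borel_measurable (\<Omega> m n)" unfolding P2_def[abs_def] by measurable
  have [measurable]: "P3 \<in> borel_measurable (\<Omega> m n)" unfolding P3_def[abs_def] by measurable
  have [measurable]: "P4 \<in> borel_measurable (\<Omega> m n)" unfolding P4_def[abs_def] by measurable
  have [measurable]: "P5 \<in> borel_measurable (\<Omega> m n)" unfolding P5_def[abs_def] by measurable
  have [measurable]: "P6 \<in> borel_measurable (\<Omega> m n)"
    using measurable_compose[OF map Hk_meas[of m]] unfolding P6_def[abs_def] by (simp add: comp_def)
  have [measurable]: "P7 \<in> borel_measurable (\<Omega> m n)"
    using measurable_compose[OF map f7_meas[of m]] unfolding P7_def[abs_def] by (simp add: comp_def)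
  define \<Phi> where "\<Phi> \<omega> = P1 \<omega> + P2 \<omega> + P3 \<omega> + P4 \<omega> + P5 \<omega> + P6 \<omega> + P7 \<omega>" for \<omega>
  have [measurable]: "\<Phi> \<in> borel_measurable (\<Omega> m n)" unfolding \<Phi>_def[abs_def] by measurable
  have sub: "{((D, Z), x) \<in> space (\<Omega> m n).
                measure (cond_law pis Pout x)
                  (conformal_set \<alpha> n Z (w_hat m D)
                     (\<lambda>x y. max (y - qhi_hat m D x) (qlo_hat m D x - y)) x)
                \<le> 1 - \<alpha> - t} \<subseteq> {\<omega> \<in> space (\<Omega> m n). 1 \<le> \<Phi> \<omega>}"
  proof (safe)
    fix D Z x assume \<omega>: "((D, Z), x) \<in> space (\<Omega> m n)"
      and bad: "measure (cond_law pis Pout x) (conformal_set \<alpha> n Z (w_hat m D)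
                     (\<lambda>x y. max (y - qhi_hat m D x) (qlo_hat m D x - y)) x) \<le> 1 - \<alpha> - t"
    show "1 \<le> \<Phi> ((D, Z), x)"
      using Ebad_sub[OF n z e d c6 K tail \<omega>] bad
      unfolding \<Phi>_def P1_def P2_def P3_def P4_def P5_def P6_def P7_def by simp
  qed
  have "outer_measure_of (\<Omega> m n) {((D, Z), x) \<in> space (\<Omega> m n).
                measure (cond_law pis Pout x)
                  (conformal_set \<alpha> n Z (w_hat m D)
                     (\<lambda>x y. max (y - qhi_hat m D x) (qlo_hat m D x - y)) x)
                \<le> 1 - \<alpha> - t} \<le> outer_measure_of (\<Omega> m n) {\<omega> \<in> space (\<Omega> m n). 1 \<le> \<Phi> \<omega>}"
    by (rule outer_measure_of_mono[OF sub])
  also have "\<dots> = emeasure (\<Omega> m n) {\<omega> \<in> space (\<Omega> m n). 1 \<le> \<Phi> \<omega>}"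
    by (rule outer_measure_of_eq) measurable
  also have "\<dots> = (\<integral>\<^sup>+\<omega>. indicator {\<omega> \<in> space (\<Omega> m n). 1 \<le> \<Phi> \<omega>} \<omega> \<partial>\<Omega> m n)"
    by (rule nn_integral_indicator[symmetric]) measurable
  also have "\<dots> \<le> (\<integral>\<^sup>+\<omega>. \<Phi> \<omega> \<partial>\<Omega> m n)"
    by (intro nn_integral_mono) (auto simp: indicator_def)
  also have "\<dots> = (\<integral>\<^sup>+\<omega>. P1 \<omega> \<partial>\<Omega> m n) + (\<integral>\<^sup>+\<omega>. P2 \<omega> \<partial>\<Omega> m n) + (\<integral>\<^sup>+\<omega>. P3 \<omega> \<partial>\<Omega> m n)
      + (\<integral>\<^sup>+\<omega>. P4 \<omega> \<partial>\<Omega> m n) + (\<integral>\<^sup>+\<omega>. P5 \<omega> \<partial>\<Omega> m n) + (\<integral>\<^sup>+\<omega>. P6 \<omega> \<partial>\<Omega> m n)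
      + (\<integral>\<^sup>+\<omega>. P7 \<omega> \<partial>\<Omega> m n)"
    unfolding \<Phi>_def by (simp add: nn_integral_add)
  also have "\<dots> \<le> a3 m * ennreal (1 / \<delta>) + of_nat n * a1 m * ennreal (1 / (real n * \<epsilon>))
       + ennreal (exp (- 2 * real n * \<epsilon>\<^sup>2 / K\<^sup>2))
       + of_nat n * ennreal (\<integral>z. max (w z - K) 0 \<partial>Pb) * ennreal (1 / (real n * \<epsilon>))
       + ennreal (exp (- 2 * real n * \<epsilon>\<^sup>2 / K\<^sup>2))
       + a3 m * ennreal (1 / c6) + a1 m * ennreal (1 / (t / 2))"
  proof -
    have i1: "(\<integral>\<^sup>+\<omega>. P1 \<omega> \<partial>\<Omega> m n) = a3 m * ennreal (1 / \<delta>)"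
    proof -
      have "(\<integral>\<^sup>+\<omega>. P1 \<omega> \<partial>\<Omega> m n) = (\<integral>\<^sup>+D. f1 m D * ennreal (1 / \<delta>) \<partial>MM m)"
        unfolding P1_def by (rule int_fst_fst) measurable
      also have "\<dots> = a3 m * ennreal (1 / \<delta>)" by (simp add: nn_integral_multc f1_int)
      finally show ?thesis .
    qed
    have i2: "(\<integral>\<^sup>+\<omega>. P2 \<omega> \<partial>\<Omega> m n) = of_nat n * a1 m * ennreal (1 / (real n * \<epsilon>))"
    proof -
      have "(\<integral>\<^sup>+\<omega>. P2 \<omega> \<partial>\<Omega> m n) = (\<integral>\<^sup>+u. f2 m n u * ennreal (1 / (real n * \<epsilon>)) \<partial>(MM m \<Otimes>\<^sub>M MM n))"
        unfolding P2_def by (rule int_fst) measurable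
      also have "\<dots> = of_nat n * a1 m * ennreal (1 / (real n * \<epsilon>))" by (simp add: nn_integral_multc f2_int)
      finally show ?thesis .
    qed
    have i3: "(\<integral>\<^sup>+\<omega>. P3 \<omega> \<partial>\<Omega> m n) \<le> ennreal (exp (- 2 * real n * \<epsilon>\<^sup>2 / K\<^sup>2))"
    proof -
      have "(\<integral>\<^sup>+\<omega>. P3 \<omega> \<partial>\<Omega> m n) = (\<integral>\<^sup>+Z. indicator (T3 n K \<epsilon>) Z \<partial>MM n)"
        unfolding P3_def by (rule int_snd_fst) measurable
      also have "\<dots> = emeasure (MM n) (T3 n K \<epsilon>)" by simp
      also have "\<dots> \<le> ennreal (exp (- 2 * real n * \<epsilon>\<^sup>2 / K\<^sup>2))"
        by (rule T3_bound[OF n K]) (unfold e, use b1 z in simp)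
      finally show ?thesis .
    qed
    have i4: "(\<integral>\<^sup>+\<omega>. P4 \<omega> \<partial>\<Omega> m n) = of_nat n * ennreal (\<integral>z. max (w z - K) 0 \<partial>Pb) * ennreal (1 / (real n * \<epsilon>))"
    proof -
      have "(\<integral>\<^sup>+\<omega>. P4 \<omega> \<partial>\<Omega> m n) = (\<integral>\<^sup>+Z. f4 n K Z * ennreal (1 / (real n * \<epsilon>)) \<partial>MM n)"
        unfolding P4_def by (rule int_snd_fst) measurable
      also have "\<dots> = of_nat n * ennreal (\<integral>z. max (w z - K) 0 \<partial>Pb) * ennreal (1 / (real n * \<epsilon>))"
        using K by (simp add: nn_integral_multc f4_int)
      finally show ?thesis .
    qed
    have i5: "(\<integral>\<^sup>+\<omega>. P5 \<omega> \<partial>\<Omega> m n) \<le> ennreal (exp (- 2 * real n * \<epsilon>\<^sup>2 / K\<^sup>2))"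
    proof -
      have "(\<integral>\<^sup>+\<omega>. P5 \<omega> \<partial>\<Omega> m n) = (\<integral>\<^sup>+u. indicator (T5 m n \<zeta> K \<epsilon> \<delta>) u \<partial>(MM m \<Otimes>\<^sub>M MM n))"
        unfolding P5_def by (rule int_fst) measurable
      also have "\<dots> = emeasure (MM m \<Otimes>\<^sub>M MM n) (T5 m n \<zeta> K \<epsilon> \<delta>)" by simp
      also have "\<dots> \<le> ennreal (exp (- 2 * real n * \<epsilon>\<^sup>2 / K\<^sup>2))"
        by (rule T5_bound[OF n z(1) _ z(4) K e d]) (use z r in simp)
      finally show ?thesis .
    qed
    have i6: "(\<integral>\<^sup>+\<omega>. P6 \<omega> \<partial>\<Omega> m n) = a3 m * ennreal (1 / c6)"
    proof -
      have "(\<integral>\<^sup>+\<omega>. P6 \<omega> \<partial>\<Omega> m n) = (\<integral>\<^sup>+u. ennreal (H m (fst u) (snd u) powr k) * ennreal (1 / c6) \<partial>(MM m \<Otimes>\<^sub>M PX))"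
        unfolding P6_def using int_DX[of "\<lambda>u. ennreal (H m (fst u) (snd u) powr k) * ennreal (1 / c6)" m n] by simp
      also have "\<dots> = a3 m * ennreal (1 / c6)" unfolding a3_def by (simp add: nn_integral_multc)
      finally show ?thesis .
    qed
    have i7: "(\<integral>\<^sup>+\<omega>. P7 \<omega> \<partial>\<Omega> m n) \<le> a1 m * ennreal (1 / (t / 2))"
    proof -
      have "(\<integral>\<^sup>+\<omega>. P7 \<omega> \<partial>\<Omega> m n) = (\<integral>\<^sup>+u. f7 m u * ennreal (1 / (t / 2)) \<partial>(MM m \<Otimes>\<^sub>M PX))"
        unfolding P7_def using int_DX[of "\<lambda>u. f7 m u * ennreal (1 / (t / 2))" m n] by simp
      also have "\<dots> = (\<integral>\<^sup>+u. f7 m u \<partial>(MM m \<Otimes>\<^sub>M PX)) * ennreal (1 / (t / 2))"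
        by (simp add: nn_integral_multc)
      also have "\<dots> \<le> a1 m * ennreal (1 / (t / 2))"
        by (intro mult_right_mono f7_int) simp
      finally show ?thesis .
    qed
    show ?thesis using i1 i2 i3 i4 i5 i6 i7 by (intro add_mono) auto
  qed
  finally show ?thesis .
qed

lemma ennreal_scale_le:
  assumes "X \<le> ennreal (c * q)" "q > 0" "c \<ge> 0"
  shows "X * ennreal (1 / q) \<le> ennreal c"
proof -
  have "X * ennreal (1 / q) \<le> ennreal (c * q) * ennreal (1 / q)" using assms(1) by (rule mult_right_mono) simp
  also have "\<dots> = ennreal (c * q * (1 / q))" using assms by (intro ennreal_mult[symmetric]) auto
  also have "\<dots> = ennreal c" using assms by simp
  finally show ?thesis .
qed

lemma exp_eventually:
  assumes c: "c > 0" and g: "g > 0" and that: "\<epsilon>\<^sup>2 / K\<^sup>2 = c"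
  shows "eventually (\<lambda>n. exp (- 2 * real n * \<epsilon>\<^sup>2 / K\<^sup>2) < g) sequentially"
proof -
  have "filterlim (\<lambda>n. (2 * c) * real n) at_top sequentially"
    by (rule filterlim_tendsto_pos_mult_at_top[OF tendsto_const _ filterlim_real_sequentially]) (use c in simp)
  then have "filterlim (\<lambda>n. - ((2 * c) * real n)) at_bot sequentially"
    by (simp add: filterlim_uminus_at_bot)
  then have "((\<lambda>n. exp (- ((2 * c) * real n))) \<longlongrightarrow> 0) sequentially"
    by (rule filterlim_compose[OF exp_at_bot])
  moreover have "\<And>n. - 2 * real n * \<epsilon>\<^sup>2 / K\<^sup>2 = - ((2 * c) * real n)"
    unfolding that[symmetric] by (simp add: field_simps)
  ultimately show ?thesis using order_tendstoD(2)[OF _ g] by simp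
qed

theorem final:
  "((\<lambda>(m, n). outer_measure_of (\<Omega> m n)
             {((D, Z), x) \<in> space (\<Omega> m n).
                measure (cond_law pis Pout x)
                  (conformal_set \<alpha> n Z (w_hat m D)
                     (\<lambda>x y. max (y - qhi_hat m D x) (qlo_hat m D x - y)) x)
                \<le> 1 - \<alpha> - t})
         \<longlongrightarrow> 0) (sequentially \<times>\<^sub>F sequentially)"
proof (rule order_tendstoI, goal_cases)
  case (1 a) then show ?case by simp
next
  case (2 a)
  then have a: "0 < a" .
  obtain a' where a': "0 < a'" "a' < a" using dense[OF a] by auto
  define \<gamma> where "\<gamma> = enn2real a'"
  have fin: "a' < top" using a'(2) by (rule order.strict_trans2) simp
  have ga: "ennreal \<gamma> < a" "\<gamma> > 0" using a' fin by (auto simp: \<gamma>_def enn2real_positive_iff ennreal_enn2real)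
  define \<zeta> where "\<zeta> = min (min (r / 2) (t / (6 * b2))) (min ((1 - \<alpha>) / b1) (1 / b1))"
  have z0: "0 < \<zeta>" using r t b1 b2 alpha by (simp add: \<zeta>_def)
  have z1: "\<zeta> \<le> r / 2" unfolding \<zeta>_def by (rule order_trans[OF min.cobounded1 min.cobounded1])
  have z2: "3 * b2 * \<zeta> \<le> t / 2"
  proof -
    have "\<zeta> \<le> t / (6 * b2)" unfolding \<zeta>_def by (rule order_trans[OF min.cobounded1 min.cobounded2])
    then show ?thesis using b2 by (simp add: field_simps)
  qed
  have z3: "b1 * \<zeta> \<le> 2 * (1 - \<alpha>)"
  proof -
    have "\<zeta> \<le> (1 - \<alpha>) / b1" unfolding \<zeta>_def by (rule order_trans[OF min.cobounded2 min.cobounded1])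
    then show ?thesis using b1 alpha by (simp add: field_simps)
  qed
  have z4: "b1 * \<zeta> \<le> 1"
  proof -
    have "\<zeta> \<le> 1 / b1" unfolding \<zeta>_def by (rule order_trans[OF min.cobounded2 min.cobounded2])
    then show ?thesis using b1 by (simp add: field_simps)
  qed
  define \<epsilon> where "\<epsilon> = b1 * \<zeta> / 24"
  define \<delta> where "\<delta> = (b1 * \<zeta> / 8) * (\<zeta> / 2) powr k"
  define c6 where "c6 = (\<zeta> / 2) powr k"
  have e0: "\<epsilon> > 0" using b1 z0 by (simp add: \<epsilon>_def)
  have d0: "\<delta> > 0" using b1 z0 by (simp add: \<delta>_def)
  have c60: "c6 > 0" using z0 by (simp add: c6_def)
  obtain K where K: "K > 0" and tailK: "(\<integral>z. max (w z - K) 0 \<partial>Pb) \<le> min \<epsilon> (\<gamma> * \<epsilon> / 4)"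
    using tail_small[of "min \<epsilon> (\<gamma> * \<epsilon> / 4)"] e0 ga by auto
  define T where "T = (\<integral>z. max (w z - K) 0 \<partial>Pb)"
  have T0: "T \<ge> 0" unfolding T_def by (rule Bochner_Integration.integral_nonneg) simp
  have tail: "(\<integral>z. max (w z - K) 0 \<partial>Pb) \<le> \<epsilon>" using tailK by simp
  have T1: "T \<le> \<gamma> / 4 * \<epsilon>" using tailK by (simp add: T_def)
  have ev_m: "eventually (\<lambda>m. a3 m < ennreal (\<gamma> / 8 * \<delta>) \<and> a1 m < ennreal (\<gamma> / 8 * \<epsilon>)
                 \<and> a3 m < ennreal (\<gamma> / 8 * c6) \<and> a1 m < ennreal (\<gamma> / 8 * (t / 2))) sequentially"
  proof -
    have h1: "eventually (\<lambda>m. a3 m < ennreal (\<gamma> / 8 * \<delta>)) sequentially"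
      by (rule order_tendstoD(2)[OF a3_lim]) (use ga d0 in simp)
    have h2: "eventually (\<lambda>m. a1 m < ennreal (\<gamma> / 8 * \<epsilon>)) sequentially"
      by (rule order_tendstoD(2)[OF a1_lim]) (use ga e0 in simp)
    have h3: "eventually (\<lambda>m. a3 m < ennreal (\<gamma> / 8 * c6)) sequentially"
      by (rule order_tendstoD(2)[OF a3_lim]) (use ga c60 in simp)
    have h4: "eventually (\<lambda>m. a1 m < ennreal (\<gamma> / 8 * (t / 2))) sequentially"
      by (rule order_tendstoD(2)[OF a1_lim]) (use ga t in simp)
    show ?thesis using h1 h2 h3 h4 by eventually_elim blast
  qed
  have ev_n: "eventually (\<lambda>n. n > 0 \<and> exp (- 2 * real n * \<epsilon>\<^sup>2 / K\<^sup>2) < \<gamma> / 8) sequentially"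
  proof -
    have h1: "eventually (\<lambda>n. exp (- 2 * real n * \<epsilon>\<^sup>2 / K\<^sup>2) < \<gamma> / 8) sequentially"
      by (rule exp_eventually[of "\<epsilon>\<^sup>2 / K\<^sup>2"]) (use e0 K ga in simp_all)
    show ?thesis using h1 eventually_gt_at_top[of "0::nat"] by eventually_elim blast
  qed
  have key: "(case (m, n) of (m, n) \<Rightarrow> outer_measure_of (\<Omega> m n)
             {((D, Z), x) \<in> space (\<Omega> m n).
                measure (cond_law pis Pout x)
                  (conformal_set \<alpha> n Z (w_hat m D)
                     (\<lambda>x y. max (y - qhi_hat m D x) (qlo_hat m D x - y)) x)
                \<le> 1 - \<alpha> - t}) < a"
    if hm: "a3 m < ennreal (\<gamma> / 8 * \<delta>) \<and> a1 m < ennreal (\<gamma> / 8 * \<epsilon>)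
                 \<and> a3 m < ennreal (\<gamma> / 8 * c6) \<and> a1 m < ennreal (\<gamma> / 8 * (t / 2))"
      and hn: "n > 0 \<and> exp (- 2 * real n * \<epsilon>\<^sup>2 / K\<^sup>2) < \<gamma> / 8" for m n
  proof -
    have n: "n > 0" using hn by simp
    have g8: "0 \<le> \<gamma> / 8" using ga by simp
    have b1': "a3 m * ennreal (1 / \<delta>) \<le> ennreal (\<gamma> / 8)"
      by (rule ennreal_scale_le[OF _ d0 g8]) (use hm in \<open>auto intro: less_imp_le\<close>)
    have "of_nat n * a1 m * ennreal (1 / (real n * \<epsilon>)) = a1 m * ennreal (1 / \<epsilon>)"
    proof -
      have "ennreal (real n * (1 / (real n * \<epsilon>))) = ennreal (real n) * ennreal (1 / (real n * \<epsilon>))"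
        by (rule ennreal_mult) (use e0 in auto)
      then have "of_nat n * ennreal (1 / (real n * \<epsilon>)) = ennreal (real n * (1 / (real n * \<epsilon>)))"
        by (simp add: ennreal_of_nat_eq_real_of_nat)
      also have "\<dots> = ennreal (1 / \<epsilon>)" using n by simp
      finally show ?thesis by (metis mult.assoc mult.commute)
    qed
    moreover have "a1 m * ennreal (1 / \<epsilon>) \<le> ennreal (\<gamma> / 8)"
      by (rule ennreal_scale_le[OF _ e0 g8]) (use hm in \<open>auto intro: less_imp_le\<close>)
    ultimately have b2': "of_nat n * a1 m * ennreal (1 / (real n * \<epsilon>)) \<le> ennreal (\<gamma> / 8)" by simp
    have b3: "ennreal (exp (- 2 * real n * \<epsilon>\<^sup>2 / K\<^sup>2)) \<le> ennreal (\<gamma> / 8)"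
      using hn by (intro ennreal_leI) simp
    have "of_nat n * ennreal T * ennreal (1 / (real n * \<epsilon>)) = ennreal (T / \<epsilon>)"
    proof -
      have "ennreal (real n * T * (1 / (real n * \<epsilon>))) = ennreal (real n * T) * ennreal (1 / (real n * \<epsilon>))"
        by (rule ennreal_mult) (use e0 T0 in auto)
      moreover have "ennreal (real n * T) = ennreal (real n) * ennreal T"
        by (rule ennreal_mult) (use T0 in auto)
      ultimately have "of_nat n * ennreal T * ennreal (1 / (real n * \<epsilon>)) = ennreal (real n * T * (1 / (real n * \<epsilon>)))"
        by (simp add: ennreal_of_nat_eq_real_of_nat)
      also have "real n * T * (1 / (real n * \<epsilon>)) = T / \<epsilon>" using n by simp
      finally show ?thesis .
    qed
    moreover have "T / \<epsilon> \<le> \<gamma> / 4" using T1 e0 by (simp add: divide_le_eq)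
    ultimately have b4: "of_nat n * ennreal (\<integral>z. max (w z - K) 0 \<partial>Pb) * ennreal (1 / (real n * \<epsilon>)) \<le> ennreal (\<gamma> / 4)"
      unfolding T_def by (simp add: ennreal_leI)
    have b6: "a3 m * ennreal (1 / c6) \<le> ennreal (\<gamma> / 8)"
      by (rule ennreal_scale_le[OF _ c60 g8]) (use hm in \<open>auto intro: less_imp_le\<close>)
    have b7: "a1 m * ennreal (1 / (t / 2)) \<le> ennreal (\<gamma> / 8)"
      by (rule ennreal_scale_le[OF _ _ g8]) (use hm t in \<open>auto intro: less_imp_le\<close>)
    have "outer_measure_of (\<Omega> m n)
             {((D, Z), x) \<in> space (\<Omega> m n).
                measure (cond_law pis Pout x)
                  (conformal_set \<alpha> n Z (w_hat m D)
                     (\<lambda>x y. max (y - qhi_hat m D x) (qlo_hat m D x - y)) x)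
                \<le> 1 - \<alpha> - t}
     \<le> a3 m * ennreal (1 / \<delta>) + of_nat n * a1 m * ennreal (1 / (real n * \<epsilon>))
       + ennreal (exp (- 2 * real n * \<epsilon>\<^sup>2 / K\<^sup>2))
       + of_nat n * ennreal (\<integral>z. max (w z - K) 0 \<partial>Pb) * ennreal (1 / (real n * \<epsilon>))
       + ennreal (exp (- 2 * real n * \<epsilon>\<^sup>2 / K\<^sup>2))
       + a3 m * ennreal (1 / c6) + a1 m * ennreal (1 / (t / 2))"
      by (rule main_bound[OF n z0 z1 z2 z3 z4 \<epsilon>_def \<delta>_def c6_def K tail])
    also have "\<dots> \<le> ennreal (\<gamma> / 8) + ennreal (\<gamma> / 8) + ennreal (\<gamma> / 8) + ennreal (\<gamma> / 4)
        + ennreal (\<gamma> / 8) + ennreal (\<gamma> / 8) + ennreal (\<gamma> / 8)"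
      using b1' b2' b3 b4 b6 b7 by (intro add_mono) auto
    also have "\<dots> = ennreal \<gamma>"
      using ga by (simp add: ennreal_plus[symmetric] del: ennreal_plus)
    also have "\<dots> < a" by (rule ga(1))
    finally show "(case (m, n) of (m, n) \<Rightarrow> outer_measure_of (\<Omega> m n)
             {((D, Z), x) \<in> space (\<Omega> m n).
                measure (cond_law pis Pout x)
                  (conformal_set \<alpha> n Z (w_hat m D)
                     (\<lambda>x y. max (y - qhi_hat m D x) (qlo_hat m D x - y)) x)
                \<le> 1 - \<alpha> - t}) < a" by simp
  qed
  show ?case
    unfolding eventually_prod_filter using ev_m ev_n key by blast
qed

end


theorem proposition3p3:
  fixes PX :: "'x measure" and Act :: "'a measure"
    and pib pis :: "'x \<Rightarrow> 'a measure"
    and Pout :: "'x \<times> 'a \<Rightarrow> real measure"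
    and p :: "'x \<Rightarrow> real \<Rightarrow> real"
    and \<alpha> \<alpha>lo \<alpha>hi t :: real
    and qlo_hat qhi_hat :: "nat \<Rightarrow> (nat \<Rightarrow> 'x \<times> real) \<Rightarrow> 'x \<Rightarrow> real"
    and w_hat :: "nat \<Rightarrow> (nat \<Rightarrow> 'x \<times> real) \<Rightarrow> 'x \<Rightarrow> real \<Rightarrow> real"
  defines "Pb \<equiv> joint_law PX pib Pout"
    and "Ps \<equiv> joint_law PX pis Pout"
  assumes PX: "prob_space PX"
    and pib: "pib \<in> PX \<rightarrow>\<^sub>M prob_algebra Act"
    and pis: "pis \<in> PX \<rightarrow>\<^sub>M prob_algebra Act"
    and Pout: "Pout \<in> PX \<Otimes>\<^sub>M Act \<rightarrow>\<^sub>M prob_algebra borel"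
    and dens: "\<forall>x\<in>space PX. cond_law pis Pout x = density lborel (p x)"
    and p_nonneg: "\<forall>x y. 0 \<le> p x y"
    and p_meas: "(\<lambda>(x, y). p x y) \<in> borel_measurable (PX \<Otimes>\<^sub>M borel)"
    and abs_cont: "absolutely_continuous Pb Ps"
    and alpha: "0 < \<alpha>" "\<alpha> < 1" "0 < \<alpha>lo" "\<alpha>lo < \<alpha>hi" "\<alpha>hi < 1" "\<alpha>hi - \<alpha>lo = 1 - \<alpha>"
    and qlo_meas: "\<forall>m. (\<lambda>(D, x). qlo_hat m D x) \<in> borel_measurable (PiM {..<m} (\<lambda>_. Pb) \<Otimes>\<^sub>M PX)"
    and qhi_meas: "\<forall>m. (\<lambda>(D, x). qhi_hat m D x) \<in> borel_measurable (PiM {..<m} (\<lambda>_. Pb) \<Otimes>\<^sub>M PX)"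
    and w_meas: "\<forall>m. (\<lambda>(D, xy). w_hat m D (fst xy) (snd xy)) \<in> borel_measurable (PiM {..<m} (\<lambda>_. Pb) \<Otimes>\<^sub>M Pb)"
    and A1: "(\<lambda>m. \<integral>\<^sup>+ (D, xy). ennreal \<bar>w_hat m D (fst xy) (snd xy) - enn2real (RN_deriv Pb Ps xy)\<bar>
                 \<partial>(PiM {..<m} (\<lambda>_. Pb) \<Otimes>\<^sub>M Pb)) \<longlonglongrightarrow> 0"
    and A2: "\<exists>r b1 b2. r > 0 \<and> b1 > 0 \<and> b2 > 0 \<and>
              (\<forall>x\<in>space PX. \<forall>y.
                 (\<bar>y - quantile_of \<alpha>lo (cond_law pis Pout x)\<bar> \<le> r \<or>
                  \<bar>y - quantile_of \<alpha>hi (cond_law pis Pout x)\<bar> \<le> r)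
                 \<longrightarrow> b1 \<le> p x y \<and> p x y \<le> b2)"
    and A3: "\<exists>k>0. (\<lambda>m. \<integral>\<^sup>+ (D, x). ennreal ((max \<bar>qlo_hat m D x - quantile_of \<alpha>lo (cond_law pis Pout x)\<bar>
                                                 \<bar>qhi_hat m D x - quantile_of \<alpha>hi (cond_law pis Pout x)\<bar>) powr k)
                 \<partial>(PiM {..<m} (\<lambda>_. Pb) \<Otimes>\<^sub>M PX)) \<longlonglongrightarrow> 0"
    and t: "t > 0"
  shows "((\<lambda>(m, n). outer_measure_of
             ((PiM {..<m} (\<lambda>_. Pb) \<Otimes>\<^sub>M PiM {..<n} (\<lambda>_. Pb)) \<Otimes>\<^sub>M PX)
             {((D, Z), x) \<in> space ((PiM {..<m} (\<lambda>_. Pb) \<Otimes>\<^sub>M PiM {..<n} (\<lambda>_. Pb)) \<Otimes>\<^sub>M PX).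
                measure (cond_law pis Pout x)
                  (conformal_set \<alpha> n Z (w_hat m D)
                     (\<lambda>x y. max (y - qhi_hat m D x) (qlo_hat m D x - y)) x)
                \<le> 1 - \<alpha> - t})
         \<longlongrightarrow> 0) (sequentially \<times>\<^sub>F sequentially)"
proof -
  obtain r b1 b2 where rb: "r > 0" "b1 > 0" "b2 > 0"
    and A2': "\<forall>x\<in>space PX. \<forall>y.
                 (\<bar>y - quantile_of \<alpha>lo (cond_law pis Pout x)\<bar> \<le> r \<or>
                  \<bar>y - quantile_of \<alpha>hi (cond_law pis Pout x)\<bar> \<le> r)
                 \<longrightarrow> b1 \<le> p x y \<and> p x y \<le> b2"
    using A2 by blast
  obtain k where k: "k > 0"
    and A3': "(\<lambda>m. \<integral>\<^sup>+ (D, x). ennreal ((max \<bar>qlo_hat m D x - quantile_of \<alpha>lo (cond_law pis Pout x)\<bar>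
                                                 \<bar>qhi_hat m D x - quantile_of \<alpha>hi (cond_law pis Pout x)\<bar>) powr k)
                 \<partial>(PiM {..<m} (\<lambda>_. Pb) \<Otimes>\<^sub>M PX)) \<longlonglongrightarrow> 0"
    using A3 by blast
  interpret S: setting4 PX Act pib pis Pout p \<alpha> \<alpha>lo \<alpha>hi Pb Ps r b1 b2 qlo_hat qhi_hat w_hat k t
    by (intro setting4.intro setting3.intro setting2.intro setting.intro setting4_axioms.intro
        setting3_axioms.intro setting2_axioms.intro; (fact | simp only: Pb_def Ps_def))
  show ?thesis by (rule S.final)
qed

end
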